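(* Fix an equation $(f,q,w)$ as in the context. Let $K=(k_{ij})\in SL(2,\mathbb R)$, $\gamma\in(-\pi,\pi]$, and write $\lambda_n(e^{i\gamma}K)$ for the eigenvalues with the boundary condition $[e^{i\gamma}K\,|\,-I]$. Let $\mathbf T_K=\begin{pmatrix}0&1&0&0\\0&0&-k_{21}&k_{11}\end{pmatrix}$ and $\mathbf U_K=\begin{pmatrix}k_{11}&k_{12}&0&0\\0&0&1&0\end{pmatrix}$. Then the problem with $[e^{i\gamma}K|-I]$ has exactly $N$ eigenvalues if $k_{11}-f_0k_{12}\ne0$ and $N-1$ if $k_{11}-f_0k_{12}=0$; with $\mathbf T_K$ exactly $N$ if $k_{11}\neq0$ and $N-1$ if $k_{11}=0$; with $\mathbf U_K$ exactly $N-1$ if $k_{11}-f_0k_{12}\neq0$ and $N-2$ if $k_{11}-f_0k_{12}=0$. Furthermore: (i) if $(k_{11}-f_0k_{12})k_{11}f_0>0$: $\lambda_n(\mathbf T_K)\le\lambda_n(e^{i\gamma}K)$ for $0\le n\le N-1$ and $\lambda_n(e^{i\gamma}K)\le\lambda_{n+1}(\mathbf T_K)$ for $0\le n\le N-2$; if $(k_{11}-f_0k_{12})k_{11}f_0<0$: $\lambda_n(e^{i\gamma}K)\le\lambda_n(\mathbf T_K)$ for $0\le n\le N-1$ and $\lambda_n(\mathbf T_K)\le\lambda_{n+1}(e^{i\gamma}K)$ for $0\le n\le N-2$; if $k_{11}-f_0k_{12}=0$: $\lambda_n(\mathbf T_K)\le\lambda_n(e^{i\gamma}K)\le\lambda_{n+1}(\mathbf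 T_K)$ for $0\le n\le N-2$; if $k_{11}=0$: $\lambda_n(e^{i\gamma}K)\le\lambda_n(\mathbf T_K)\le\lambda_{n+1}(e^{i\gamma}K)$ for $0\le n\le N-2$; (ii) if $k_{11}-f_0k_{12}\neq0$: $\lambda_n(e^{i\gamma}K)\le\lambda_n(\mathbf U_K)\le\lambda_{n+1}(e^{i\gamma}K)$ for $0\le n\le N-2$; if $k_{11}-f_0k_{12}=0$: $\lambda_n(e^{i\gamma}K)\le\lambda_n(\mathbf U_K)\le\lambda_{n+1}(e^{i\gamma}K)$ for $0\le n\le N-3$.
   Context: Let $N\ge2$ be an integer. An equation is given by real sequences $f=\{f_n\}_{n=0}^N$, $q=\{q_n\}_{n=1}^N$, $w=\{w_n\}_{n=1}^N$ with $f_n\neq0$, $w_n>0$; it is $-\nabla(f_n\Delta y_n)+q_ny_n=\lambda w_ny_n$, $1\le n\le N$, for $y=\{y_n\}_{n=0}^{N+1}$, $\Delta y_n=y_{n+1}-y_n$, $\nabla y_n=y_n-y_{n-1}$. A boundary condition $[A\,|\,B]$ (equivalently the $2\times4$ coefficient matrix $(A,B)$ of rank 2) is $A(y_0,f_0\Delta y_0)^T+B(y_N,f_N\Delta y_N)^T=0$; matrices differing by left multiplication by an invertible $2\times2$ complex matrix give the same condition. $SL(2,\mathbb R)$ is the set of real $2\times2$ matrices of determinant 1; $I$ is the identity. Eigenvalues ($\lambda$ with a nontrivial solution) of these self-adjoint problems are real; multiplicity = dimension of the solution space (equal to the multiplicity as a zero of the characteristic polynomial); counted with multiplicity they are ordered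 $\lambda_0\le\lambda_1\le\cdots$, and "exactly $k$ eigenvalues" counts multiplicity. *)

theory Defs
  imports "HOL-Analysis.Analysis" "HOL-Library.Function_Algebras" "HOL-Library.Multiset"
begin

text \<open>Sequences y = (y_0,...,y_{N+1}) are modelled as functions nat => complex vanishing
  beyond index N+1; the coefficients f, q, w are real sequences (only the indices
  0..N resp. 1..N matter).  A boundary condition is a 2x4 complex coefficient matrix,
  given as a function of row index i<2 and column index j<4.\<close>

definition fwd :: "(nat \<Rightarrow> complex) \<Rightarrow> nat \<Rightarrow> complex" where
  "fwd y n = y (Suc n) - y n"

definition bvec :: "(nat \<Rightarrow> real) \<Rightarrow> nat \<Rightarrow> (nat \<Rightarrow> complex) \<Rightarrow> nat \<Rightarrow> complex" where
  "bvec f N y j = (if j = 0 then y 0 else if j = 1 then of_real (f 0) * fwd y 0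
                   else if j = 2 then y N else of_real (f N) * fwd y N)"

definition sol_space ::
  "nat \<Rightarrow> (nat \<Rightarrow> real) \<Rightarrow> (nat \<Rightarrow> real) \<Rightarrow> (nat \<Rightarrow> real) \<Rightarrow> (nat \<Rightarrow> nat \<Rightarrow> complex)
   \<Rightarrow> complex \<Rightarrow> (nat \<Rightarrow> complex) set" where
  "sol_space N f q w BC lam = {y. (\<forall>n>Suc N. y n = 0)
     \<and> (\<forall>n\<in>{1..N}. - (of_real (f n) * fwd y n - of_real (f (n-1)) * fwd y (n-1))
                     + of_real (q n) * y n = lam * of_real (w n) * y n)
     \<and> (\<forall>i<2. (\<Sum>j<4. BC i j * bvec f N y j) = 0)}"

definition is_eig where
  "is_eig N f q w BC lam \<longleftrightarrow> (\<exists>y\<in>sol_space N f q w BC lam. y \<noteq> 0)"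

definition eig_mult where
  "eig_mult N f q w BC lam =
     vector_space.dim (\<lambda>(c::complex) (y::nat \<Rightarrow> complex). (\<lambda>n. c * y n)) (sol_space N f q w BC lam)"

definition eig_set where
  "eig_set N f q w BC = {lam. is_eig N f q w BC lam}"

definition num_eigs_eq where
  "num_eigs_eq N f q w BC k \<longleftrightarrow> finite (eig_set N f q w BC) \<and>
     (\<Sum>lam\<in>eig_set N f q w BC. eig_mult N f q w BC lam) = k"

text \<open>Real eigenvalues listed in nondecreasing order, repeated according to multiplicity;
  lambda_n is the n-th entry (0-based).\<close>
definition eig_list where
  "eig_list N f q w BC = sorted_list_of_multiset
     (\<Sum>x\<in>{x::real. is_eig N f q w BC (of_real x)}.
        replicate_mset (eig_mult N f q w BC (of_real x)) x)"

definition eigv where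
  "eigv N f q w BC n = eig_list N f q w BC ! n"

definition BC_K :: "real \<Rightarrow> real \<Rightarrow> real \<Rightarrow> real \<Rightarrow> real \<Rightarrow> nat \<Rightarrow> nat \<Rightarrow> complex" where
  "BC_K \<gamma> k11 k12 k21 k22 i j =
     (if i = 0 then [cis \<gamma> * of_real k11, cis \<gamma> * of_real k12, -1, 0] ! j
      else [cis \<gamma> * of_real k21, cis \<gamma> * of_real k22, 0, -1] ! j)"

definition BC_T :: "real \<Rightarrow> real \<Rightarrow> real \<Rightarrow> real \<Rightarrow> nat \<Rightarrow> nat \<Rightarrow> complex" where
  "BC_T k11 k12 k21 k22 i j =
     (if i = 0 then [0, 1, 0, 0] ! j else [0, 0, - of_real k21, of_real k11] ! j)"

definition BC_U :: "real \<Rightarrow> real \<Rightarrow> real \<Rightarrow> real \<Rightarrow> nat \<Rightarrow> nat \<Rightarrow> complex" where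
  "BC_U k11 k12 k21 k22 i j =
     (if i = 0 then [of_real k11, of_real k12, 0, 0] ! j else [0, 0, 1, 0] ! j)"

end

theory Submission
  imports Defs "HOL-Computational_Algebra.Fundamental_Theorem_Algebra"
begin

definition cp :: "real poly \<Rightarrow> complex poly" where "cp p = map_poly of_real p"

lemma coeff_cp[simp]: "coeff (cp p) n = of_real (coeff p n)"
  by (simp add: cp_def coeff_map_poly)

lemma cp_add[simp]: "cp (p + q) = cp p + cp q"
  by (rule poly_eqI) simp
lemma cp_diff[simp]: "cp (p - q) = cp p - cp q"
  by (rule poly_eqI) simp
lemma cp_uminus[simp]: "cp (- p) = - cp p"
  by (rule poly_eqI) simp
lemma cp_smult[simp]: "cp (smult c p) = smult (of_real c) (cp p)"
  by (rule poly_eqI) simp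
lemma cp_pCons[simp]: "cp (pCons a p) = pCons (of_real a) (cp p)"
  by (rule poly_eqI) (simp add: coeff_pCons split: nat.splits)
lemma cp_0[simp]: "cp 0 = 0"
  by (rule poly_eqI) simp
lemma cp_mult[simp]: "cp (p * q) = cp p * cp q"
  by (rule poly_eqI) (simp add: coeff_mult)
lemma cp_pderiv[simp]: "cp (pderiv p) = pderiv (cp p)"
  by (rule poly_eqI) (simp add: coeff_pderiv)
lemma cp_eq_0_iff[simp]: "cp p = 0 \<longleftrightarrow> p = 0"
  by (simp add: cp_def map_poly_eq_0_iff)
lemma degree_cp[simp]: "degree (cp p) = degree p"
  by (simp add: cp_def degree_map_poly)
lemma lead_coeff_cp[simp]: "lead_coeff (cp p) = of_real (lead_coeff p)"
  by simp
lemma poly_cp_of_real[simp]: "poly (cp p) (of_real x) = of_real (poly p x)"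
  by (induct p) (auto simp: algebra_simps)
lemma poly_cp_cnj: "cnj (poly (cp p) z) = poly (cp p) (cnj z)"
  by (induct p) (auto simp: algebra_simps)

lemma order_cp: "order (of_real x) (cp p) = order x p"
proof (induct "degree p" arbitrary: p rule: less_induct)
  case less
  show ?case
  proof (cases "p = 0")
    case True then show ?thesis by (simp add: order_def)
  next
    case False
    show ?thesis
    proof (cases "poly p x = 0")
      case False
      then show ?thesis using \<open>p \<noteq> 0\<close>
        by (simp add: order_0I)
    next
      case True
      have "order x p = Suc (order x (pderiv p))" by (rule order_pderiv[OF \<open>p\<noteq>0\<close> True])
      moreover have "order (of_real x) (cp p) = Suc (order (of_real x) (pderiv (cp p)))"
        by (rule order_pderiv) (use \<open>p\<noteq>0\<close> True in auto)
      moreover have "degree (pderiv p) < degree p"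
      proof -
        have "degree p \<noteq> 0"
        proof
          assume "degree p = 0"
          then obtain c where "p = [:c:]" by (metis degree_eq_zeroE)
          with True \<open>p\<noteq>0\<close> show False by simp
        qed
        then show ?thesis by (simp add: degree_pderiv)
      qed
      ultimately show ?thesis using less[of "pderiv p"] by simp
    qed
  qed
qed

lemma realcnt:
  assumes p: "p \<noteq> 0" and real: "\<forall>z. poly (cp p) z = 0 \<longrightarrow> z \<in> \<real>"
  shows "(\<Sum>x\<in>{x. poly p x = 0}. order x p) = degree p"
proof -
  have cp0: "cp p \<noteq> 0" using p by simp
  have "degree p = size (proots (cp p))" by (simp add: size_proots_complex)
  also have "\<dots> = (\<Sum>z\<in>set_mset (proots (cp p)). count (proots (cp p)) z)"
    by (simp add: size_multiset_overloaded_eq)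
  also have "\<dots> = (\<Sum>z\<in>{z. poly (cp p) z = 0}. order z (cp p))"
    using cp0 by simp
  also have "{z. poly (cp p) z = 0} = of_real ` {x. poly p x = 0}"
  proof safe
    fix z assume "poly (cp p) z = 0"
    with real have "z \<in> \<real>" by auto
    then obtain x where "z = of_real x" by (auto elim: Reals_cases)
    with \<open>poly (cp p) z = 0\<close> show "z \<in> of_real ` {x. poly p x = 0}" by auto
  qed auto
  also have "(\<Sum>z\<in>of_real ` {x. poly p x = 0}. order z (cp p)) = (\<Sum>x\<in>{x. poly p x = 0}. order x p)"
    by (subst sum.reindex) (auto simp: inj_on_def order_cp)
  finally show ?thesis by simp
qed


lemma nr_IVT:
  fixes P :: "real poly"
  assumes "a \<le> b" "\<forall>u. a \<le> u \<and> u \<le> b \<longrightarrow> poly P u \<noteq> 0"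
  shows "sgn (poly P a) = sgn (poly P b)"
proof (rule ccontr)
  assume ne: "sgn (poly P a) \<noteq> sgn (poly P b)"
  have pa: "poly P a \<noteq> 0" and pb: "poly P b \<noteq> 0" using assms by auto
  have "a < b" using ne assms(1) by (cases "a = b") auto
  from ne pa pb have "poly P a * poly P b < 0"
    by (auto simp: sgn_if mult_less_0_iff split: if_splits)
  from poly_IVT[OF \<open>a < b\<close> this] obtain x where "a < x" "x < b" "poly P x = 0" by auto
  with assms show False by auto
qed

lemma sr1_pos:
  fixes P :: "real poly"
  assumes "poly P c = 0" "poly (pderiv P) c > 0" "c < y" "\<forall>u. c < u \<and> u \<le> y \<longrightarrow> poly P u \<noteq> 0"
  shows "poly P y > 0"
proof -
  obtain d where d: "d > 0" "\<forall>h>0. h < d \<longrightarrow> poly P c < poly P (c + h)"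
    using DERIV_pos_inc_right[OF poly_DERIV assms(2)] by blast
  define h where "h = min (d/2) (y - c)"
  have h: "h > 0" "h < d" "c + h \<le> y" using d assms(3) by (auto simp: h_def)
  have "poly P (c + h) > 0" using d h assms(1) by auto
  moreover have "sgn (poly P (c + h)) = sgn (poly P y)"
    by (rule nr_IVT) (use h assms(4) in auto)
  ultimately show ?thesis by (simp add: sgn_if split: if_splits)
qed

lemma sl1_pos:
  fixes P :: "real poly"
  assumes "poly P c = 0" "poly (pderiv P) c > 0" "x < c" "\<forall>u. x \<le> u \<and> u < c \<longrightarrow> poly P u \<noteq> 0"
  shows "poly P x < 0"
proof -
  obtain d where d: "d > 0" "\<forall>h>0. h < d \<longrightarrow> poly P (c - h) < poly P c"
    using DERIV_pos_inc_left[OF poly_DERIV assms(2)] by blast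
  define h where "h = min (d/2) (c - x)"
  have h: "h > 0" "h < d" "x \<le> c - h" using d assms(3) by (auto simp: h_def)
  have "poly P (c - h) < 0" using d h assms(1) by auto
  moreover have "sgn (poly P x) = sgn (poly P (c - h))"
    by (rule nr_IVT) (use h assms(4) in auto)
  ultimately show ?thesis by (simp add: sgn_if split: if_splits)
qed

lemma sr2_neg:
  fixes P :: "real poly"
  assumes "poly P c = 0" "poly (pderiv P) c = 0" "poly (pderiv (pderiv P)) c < 0" "c < y"
    "\<forall>u. c < u \<and> u \<le> y \<longrightarrow> poly P u \<noteq> 0"
  shows "poly P y < 0"
proof -
  obtain d where d: "d > 0" "\<forall>h>0. h < d \<longrightarrow> poly (pderiv P) c > poly (pderiv P) (c + h)"
    using DERIV_neg_dec_right[OF poly_DERIV assms(3)] by blast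
  define h where "h = min (d/2) (y - c)"
  have h: "h > 0" "h < d" "c + h \<le> y" using d assms(4) by (auto simp: h_def)
  obtain z where z: "c < z" "z < c + h" "poly P (c + h) - poly P c = (c + h - c) * poly (pderiv P) z"
    using poly_MVT[of c "c + h" P] h by auto
  have "poly (pderiv P) z < 0" using d(2)[rule_format, of "z - c"] z h assms(2) by auto
  then have "poly P (c + h) < 0" using z assms(1) h by (simp add: mult_pos_neg)
  moreover have "sgn (poly P (c + h)) = sgn (poly P y)"
    by (rule nr_IVT) (use h assms(5) in auto)
  ultimately show ?thesis by (simp add: sgn_if split: if_splits)
qed

lemma sl2_neg:
  fixes P :: "real poly"
  assumes "poly P c = 0" "poly (pderiv P) c = 0" "poly (pderiv (pderiv P)) c < 0" "x < c"
    "\<forall>u. x \<le> u \<and> u < c \<longrightarrow> poly P u \<noteq> 0"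
  shows "poly P x < 0"
proof -
  obtain d where d: "d > 0" "\<forall>h>0. h < d \<longrightarrow> poly (pderiv P) c < poly (pderiv P) (c - h)"
    using DERIV_neg_dec_left[OF poly_DERIV assms(3)] by blast
  define h where "h = min (d/2) (c - x)"
  have h: "h > 0" "h < d" "x \<le> c - h" using d assms(4) by (auto simp: h_def)
  obtain z where z: "c - h < z" "z < c" "poly P c - poly P (c - h) = (c - (c - h)) * poly (pderiv P) z"
    using poly_MVT[of "c - h" c P] h by auto
  have "poly (pderiv P) z > 0" using d(2)[rule_format, of "c - z"] z h assms(2) by auto
  then have "h * poly (pderiv P) z > 0" using h by simp
  then have "poly P (c - h) < 0" using z assms(1) h by (simp add: algebra_simps)
  moreover have "sgn (poly P x) = sgn (poly P (c - h))"
    by (rule nr_IVT) (use h assms(5) in auto)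
  ultimately show ?thesis by (simp add: sgn_if split: if_splits)
qed

lemma sr1:
  fixes P :: "real poly"
  assumes "poly P c = 0" "poly (pderiv P) c \<noteq> 0" "c < y" "\<forall>u. c < u \<and> u \<le> y \<longrightarrow> poly P u \<noteq> 0"
  shows "sgn (poly P y) = sgn (poly (pderiv P) c)"
proof (cases "poly (pderiv P) c > 0")
  case True then show ?thesis using sr1_pos[OF assms(1) True assms(3,4)] by simp
next
  case False
  then have "poly (pderiv (-P)) c > 0" using assms(2) by (simp add: pderiv_minus)
  from sr1_pos[OF _ this assms(3)] assms False show ?thesis by (simp add: pderiv_minus)
qed

lemma sl1:
  fixes P :: "real poly"
  assumes "poly P c = 0" "poly (pderiv P) c \<noteq> 0" "x < c" "\<forall>u. x \<le> u \<and> u < c \<longrightarrow> poly P u \<noteq> 0"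
  shows "sgn (poly P x) = - sgn (poly (pderiv P) c)"
proof (cases "poly (pderiv P) c > 0")
  case True then show ?thesis using sl1_pos[OF assms(1) True assms(3,4)] by simp
next
  case False
  then have "poly (pderiv (-P)) c > 0" using assms(2) by (simp add: pderiv_minus)
  from sl1_pos[OF _ this assms(3)] assms False show ?thesis by (simp add: pderiv_minus)
qed

lemma sr2:
  fixes P :: "real poly"
  assumes "poly P c = 0" "poly (pderiv P) c = 0" "poly (pderiv (pderiv P)) c \<noteq> 0" "c < y"
    "\<forall>u. c < u \<and> u \<le> y \<longrightarrow> poly P u \<noteq> 0"
  shows "sgn (poly P y) = sgn (poly (pderiv (pderiv P)) c)"
proof (cases "poly (pderiv (pderiv P)) c < 0")
  case True then show ?thesis using sr2_neg[OF assms(1,2) True assms(4,5)] by simp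
next
  case False
  then have "poly (pderiv (pderiv (-P))) c < 0" using assms(3) by (simp add: pderiv_minus)
  from sr2_neg[OF _ _ this assms(4)] assms False show ?thesis by (simp add: pderiv_minus)
qed

lemma sl2:
  fixes P :: "real poly"
  assumes "poly P c = 0" "poly (pderiv P) c = 0" "poly (pderiv (pderiv P)) c \<noteq> 0" "x < c"
    "\<forall>u. x \<le> u \<and> u < c \<longrightarrow> poly P u \<noteq> 0"
  shows "sgn (poly P x) = sgn (poly (pderiv (pderiv P)) c)"
proof (cases "poly (pderiv (pderiv P)) c < 0")
  case True then show ?thesis using sl2_neg[OF assms(1,2) True assms(4,5)] by simp
next
  case False
  then have "poly (pderiv (pderiv (-P))) c < 0" using assms(3) by (simp add: pderiv_minus)
  from sl2_neg[OF _ _ this assms(4)] assms False show ?thesis by (simp add: pderiv_minus)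
qed

lemma sgn_pinf:
  fixes P :: "real poly"
  assumes "P \<noteq> 0" "\<forall>u. y \<le> u \<longrightarrow> poly P u \<noteq> 0"
  shows "sgn (poly P y) = sgn (lead_coeff P)"
proof (cases "degree P = 0")
  case True
  then obtain a where "P = [:a:]" by (metis degree_eq_zeroE)
  then show ?thesis by simp
next
  case False
  have main: "sgn (poly Q y) = sgn (lead_coeff Q)" if Q: "lead_coeff Q > 0" "\<forall>u. y \<le> u \<longrightarrow> poly Q u \<noteq> 0" for Q
  proof -
    obtain n where n: "\<forall>x\<ge>n. poly Q x \<ge> lead_coeff Q" using poly_pinfty_gt_lc[OF Q(1)] by blast
    define z where "z = max n y"
    have "poly Q z > 0" using n Q(1) by (auto simp: z_def intro: less_le_trans)
    moreover have "sgn (poly Q y) = sgn (poly Q z)" by (rule nr_IVT) (use Q(2) in \<open>auto simp: z_def\<close>)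
    ultimately show ?thesis using Q(1) by simp
  qed
  show ?thesis
  proof (cases "lead_coeff P > 0")
    case True then show ?thesis using main[OF True assms(2)] by simp
  next
    case False
    then have "lead_coeff (-P) > 0" using assms(1) by (simp add: less_le)
    from main[OF this] assms(2) show ?thesis by simp
  qed
qed


lemma poly_ext: "(\<And>t. poly p t = poly q t) \<Longrightarrow> p = (q :: 'a :: {idom,ring_char_0} poly)"
  by (rule poly_eq_poly_eq_iff[THEN iffD1]) auto

locale rotm =
  fixes p q r s :: "real poly" and c0 :: real
  assumes det: "p * s - q * r = 1"
  and rot: "\<And>t a b. (a, b) \<noteq> (0::real, 0::real) \<Longrightarrow>
     poly ((smult a r + smult b s) * pderiv (smult a p + smult b q)
           - (smult a p + smult b q) * pderiv (smult a r + smult b s)) t > 0"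
  and c0: "\<bar>c0\<bar> \<le> 2"
begin

definition "D = p + s - [:c0:]"
definition "G11 = r * pderiv p - p * pderiv r"
definition "G12 = s * pderiv p - q * pderiv r"
definition "G22 = s * pderiv q - q * pderiv s"

lemma detd: "pderiv p * s + p * pderiv s - pderiv q * r - q * pderiv r = 0"
proof -
  have "pderiv (p * s - q * r) = 0" by (simp add: det)
  then show ?thesis by (simp add: pderiv_diff pderiv_mult algebra_simps)
qed

lemma detv: "poly p t * poly s t - poly q t * poly r t = 1"
  using arg_cong[OF det, of "\<lambda>P. poly P t"] by simp

lemma detdv: "poly (pderiv p) t * poly s t + poly p t * poly (pderiv s) t
   - poly (pderiv q) t * poly r t - poly q t * poly (pderiv r) t = 0"
  using arg_cong[OF detd, of "\<lambda>P. poly P t"] by simp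

lemma qf: "poly ((smult a r + smult b s) * pderiv (smult a p + smult b q)
           - (smult a p + smult b q) * pderiv (smult a r + smult b s)) t
  = a^2 * poly G11 t + 2 * a * b * poly G12 t + b^2 * poly G22 t"
proof -
  have "poly ((smult a r + smult b s) * pderiv (smult a p + smult b q)
           - (smult a p + smult b q) * pderiv (smult a r + smult b s)) t
    = a^2 * poly G11 t + 2 * a * b * poly G12 t + b^2 * poly G22 t
      - a * b * (poly (pderiv p) t * poly s t + poly p t * poly (pderiv s) t
   - poly (pderiv q) t * poly r t - poly q t * poly (pderiv r) t)"
    by (simp add: G11_def G12_def G22_def pderiv_add pderiv_smult algebra_simps power2_eq_square)
  then show ?thesis using detdv[of t] by simp
qed

lemma g11pos: "poly G11 t > 0"
  using rot[of 1 0 t] qf[of 1 0 t] by simp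

lemma g22pos: "poly G22 t > 0"
  using rot[of 0 1 t] qf[of 0 1 t] by simp

lemma gdet: "poly G11 t * poly G22 t - (poly G12 t)^2 > 0"
proof -
  have ne: "(poly G12 t, - poly G11 t) \<noteq> (0, 0)" using g11pos[of t] by auto
  have "poly G11 t * (poly G11 t * poly G22 t - (poly G12 t)^2) > 0"
    using rot[OF ne, of t] qf[of "poly G12 t" "- poly G11 t" t]
    by (simp add: algebra_simps power2_eq_square)
  then show ?thesis using g11pos[of t] by (simp add: zero_less_mult_iff)
qed

lemma Dderiv: "pderiv D = - q * G11 + (p - s) * G12 + r * G22"
proof -
  have "- q * G11 + (p - s) * G12 + r * G22 = pderiv p + pderiv s
     + (pderiv p + pderiv s) * (p * s - q * r - 1)
     - s * (pderiv p * s + p * pderiv s - pderiv q * r - q * pderiv r)"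
    by (intro poly_ext) (simp add: G11_def G12_def G22_def algebra_simps power2_eq_square)
  then show ?thesis by (simp add: det detd D_def pderiv_add pderiv_diff)
qed

lemma Dderiv_v: "poly (pderiv D) t = - poly q t * poly G11 t + (poly p t - poly s t) * poly G12 t
   + poly r t * poly G22 t"
  by (simp add: Dderiv)

lemma K2:
  assumes rt: "poly r t \<noteq> 0" and tr: "\<bar>poly p t + poly s t\<bar> \<le> 2"
  shows "poly r t * poly (pderiv D) t > 0"
proof -
  define P where "P = poly p t"
  define Q where "Q = poly q t"
  define R where "R = poly r t"
  define S where "S = poly s t"
  define x where "x = poly G11 t"
  define y where "y = poly G12 t"
  define z where "z = poly G22 t"
  have dt: "P * S - Q * R = 1" using detv[of t] by (simp add: P_def Q_def R_def S_def)
  have x: "x > 0" using g11pos by (simp add: x_def)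
  have xz: "x * z - y^2 > 0" using gdet by (simp add: x_def y_def z_def)
  have tr': "(P + S)^2 \<le> 4"
  proof -
    have "-2 \<le> P + S" "P + S \<le> 2" using tr by (auto simp: P_def S_def)
    then have "(P + S - 2) * (P + S + 2) \<le> 0" by (intro mult_nonpos_nonneg) auto
    then show ?thesis by (simp add: power2_eq_square algebra_simps)
  qed
  have dv: "poly (pderiv D) t = - Q * x + (P - S) * y + R * z"
    by (simp add: Dderiv_v P_def Q_def R_def S_def x_def y_def z_def)
  have eq: "x * (R * (- Q * x + (P - S) * y + R * z))
     = ((P - S) / 2 * x + R * y)^2 + R^2 * (x * z - y^2) + x^2 * ((4 - (P + S)^2) / 4)"
  proof -
    have QR: "Q * R = P * S - 1" using dt by simp
    have "x * (R * (- Q * x + (P - S) * y + R * z)) = - (Q * R) * x^2 + (P - S) * R * x * y + R^2 * x * z"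
      by (simp add: algebra_simps power2_eq_square)
    also have "\<dots> = - (P * S - 1) * x^2 + (P - S) * R * x * y + R^2 * x * z" by (simp only: QR)
    also have "\<dots> = ((P - S) / 2 * x + R * y)^2 + R^2 * (x * z - y^2) + x^2 * ((4 - (P + S)^2) / 4)"
      by (simp add: field_simps power2_eq_square)
    finally show ?thesis .
  qed
  have R2: "R^2 > 0" using rt by (simp add: R_def)
  have "R^2 * (x * z - y^2) > 0" using R2 xz by simp
  moreover have "x^2 * ((4 - (P + S)^2) / 4) \<ge> 0" using tr' by simp
  moreover have "((P - S) / 2 * x + R * y)^2 \<ge> 0" by simp
  ultimately have "x * (R * (- Q * x + (P - S) * y + R * z)) > 0" unfolding eq by linarith
  then have "R * (- Q * x + (P - S) * y + R * z) > 0" using x by (simp add: zero_less_mult_iff)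
  then show ?thesis using dv by (simp add: R_def)
qed

lemma K3:
  assumes rt: "poly r t = 0"
  shows "poly p t * poly D t \<ge> 0" "poly D t = 0 \<Longrightarrow> poly p t = poly s t \<and> (poly p t)^2 = 1"
    "poly (pderiv r) t * poly p t < 0"
proof -
  define P where "P = poly p t"
  define S where "S = poly s t"
  have PS: "P * S = 1" using detv[of t] rt by (simp add: P_def S_def)
  have Dv: "poly p t * poly D t = P * (P + S - c0)" by (simp add: D_def P_def S_def)
  have e1: "P * (P + S - c0) = P^2 + 1 - c0 * P" using PS by (simp add: algebra_simps power2_eq_square)
  have "c0 * P \<le> \<bar>c0\<bar> * \<bar>P\<bar>" by (metis abs_ge_self abs_mult)
  also have "\<dots> \<le> 2 * \<bar>P\<bar>" using c0 by (intro mult_right_mono) auto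
  finally have c0P: "c0 * P \<le> 2 * \<bar>P\<bar>" .
  have e2: "(\<bar>P\<bar> - 1)^2 = P^2 - 2 * \<bar>P\<bar> + 1"
    by (simp add: power2_eq_square algebra_simps abs_mult_self_eq)
  have main: "P * (P + S - c0) \<ge> (\<bar>P\<bar> - 1)^2" using e1 e2 c0P by linarith
  have z: "(\<bar>P\<bar> - 1)^2 \<ge> 0" by (rule zero_le_power2)
  show "poly p t * poly D t \<ge> 0" using Dv main z by linarith
  show "poly D t = 0 \<Longrightarrow> poly p t = poly s t \<and> (poly p t)^2 = 1"
  proof -
    assume "poly D t = 0"
    then have "P * (P + S - c0) = 0" using Dv by simp
    then have "(\<bar>P\<bar> - 1)^2 = 0" using main z by linarith
    then have aP: "\<bar>P\<bar> = 1" by simp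
    then have P2: "P * P = 1" by (metis abs_mult_self_eq mult_1_right)
    have "P * S = P * P" using PS P2 by simp
    then have "S = P" using aP by auto
    then show ?thesis using P2 by (simp add: P_def S_def power2_eq_square)
  qed
  show "poly (pderiv r) t * poly p t < 0"
    using g11pos[of t] rt by (simp add: G11_def mult.commute)
qed

lemma K4:
  assumes rt: "poly r t = 0" and Dt: "poly D t = 0"
  shows "poly (pderiv D) t = - poly q t * poly G11 t"
    "poly q t = 0 \<Longrightarrow> poly (pderiv (pderiv D)) t * poly p t < 0"
proof -
  have ps: "poly p t = poly s t" "(poly p t)^2 = 1" using K3(2)[OF rt Dt] by auto
  show "poly (pderiv D) t = - poly q t * poly G11 t" using Dderiv_v[of t] ps rt by simp
  assume qt: "poly q t = 0"
  define P where "P = poly p t"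
  define p' where "p' = poly (pderiv p) t"
  define q' where "q' = poly (pderiv q) t"
  define r' where "r' = poly (pderiv r) t"
  define s' where "s' = poly (pderiv s) t"
  have P2: "P^2 = 1" using ps by (simp add: P_def)
  have s': "s' = - p'"
  proof -
    have "P * (p' + s') = 0" using detdv[of t] rt qt ps
      by (simp add: P_def p'_def s'_def algebra_simps)
    then show ?thesis using P2 by auto
  qed
  have "poly (pderiv (pderiv D)) t = - q' * poly G11 t + (p' - s') * poly G12 t + r' * poly G22 t"
    using rt qt ps by (simp add: Dderiv pderiv_add pderiv_mult pderiv_diff pderiv_minus
       p'_def q'_def r'_def s'_def)
  also have "\<dots> = P * (2 * q' * r' + 2 * p'^2)"
    using rt qt ps s' by (simp add: G11_def G12_def G22_def P_def p'_def q'_def r'_def s'_def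
        algebra_simps power2_eq_square)
  finally have D2: "poly (pderiv (pderiv D)) t = P * (2 * q' * r' + 2 * p'^2)" .
  have "poly G11 t * poly G22 t - (poly G12 t)^2 = - ((poly p t)^2 * (r' * q' + p'^2))"
    using rt qt ps(1) s' by (simp add: G11_def G12_def G22_def p'_def q'_def r'_def s'_def
        algebra_simps power2_eq_square)
  then have "poly G11 t * poly G22 t - (poly G12 t)^2 = - (r' * q' + p'^2)" using ps(2) by simp
  then have "r' * q' + p'^2 < 0" using gdet[of t] P2 by simp
  then show "poly (pderiv (pderiv D)) t * poly p t < 0"
  proof -
    have "poly (pderiv (pderiv D)) t * poly p t = (P * P) * (2 * q' * r' + 2 * p'^2)"
      using D2 by (simp add: P_def algebra_simps)
    also have "\<dots> = 2 * (r' * q' + p'^2)" using P2 by (simp add: power2_eq_square algebra_simps)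
    finally show ?thesis using \<open>r' * q' + p'^2 < 0\<close> by simp
  qed
qed

end

definition cntp :: "real poly \<Rightarrow> real \<Rightarrow> nat" where
  "cntp P t = (\<Sum>x\<in>{x. poly P x = 0 \<and> x \<le> t}. order x P)"

lemma cnt1:
  assumes P: "P \<noteq> 0" and xy: "x < c" "c < y" and nr: "\<forall>u. x < u \<and> u \<le> y \<and> u \<noteq> c \<longrightarrow> poly P u \<noteq> 0"
  shows "cntp P y = cntp P x + (if poly P c = 0 then order c P else 0)"
proof -
  have fin: "finite {x. poly P x = 0 \<and> x \<le> t}" for t
    by (rule finite_subset[OF _ poly_roots_finite[OF P]]) auto
  have a: "u \<le> x" if "poly P u = 0" "u \<le> y" "u \<noteq> c" for u
    using nr that by (meson not_le)
  have eq: "{u. poly P u = 0 \<and> u \<le> y} = {u. poly P u = 0 \<and> u \<le> x} \<union> (if poly P c = 0 then {c} else {})"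
    using a xy by (auto split: if_splits)
  show ?thesis unfolding cntp_def eq
    by (subst sum.union_disjoint) (use fin xy in auto)
qed

lemma cnt0:
  assumes P: "P \<noteq> 0" and xy: "x \<le> y" and nr: "\<forall>u. x < u \<and> u \<le> y \<longrightarrow> poly P u \<noteq> 0"
  shows "cntp P y = cntp P x"
proof -
  have a: "u \<le> x" if "poly P u = 0" "u \<le> y" for u
    using nr that by (meson not_le)
  have eq: "{u. poly P u = 0 \<and> u \<le> y} = {u. poly P u = 0 \<and> u \<le> x}"
    using a xy by auto
  show ?thesis unfolding cntp_def eq ..
qed

lemma order1I:
  fixes P :: "real poly"
  assumes "poly P c = 0" "poly (pderiv P) c \<noteq> 0"
  shows "order c P = 1"
proof -
  have "P \<noteq> 0" using assms(2) by auto
  have "order c P = Suc (order c (pderiv P))" by (rule order_pderiv[OF \<open>P \<noteq> 0\<close> assms(1)])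
  moreover have "order c (pderiv P) = 0" using assms(2) by (simp add: order_0I)
  ultimately show ?thesis by simp
qed

lemma order2I:
  fixes P :: "real poly"
  assumes "poly P c = 0" "poly (pderiv P) c = 0" "poly (pderiv (pderiv P)) c \<noteq> 0"
  shows "order c P = 2"
proof -
  have "pderiv P \<noteq> 0" using assms(3) by auto
  then have "P \<noteq> 0" by auto
  have "order c P = Suc (order c (pderiv P))" by (rule order_pderiv[OF \<open>P \<noteq> 0\<close> assms(1)])
  moreover have "order c (pderiv P) = 1" by (rule order1I[OF assms(2,3)])
  ultimately show ?thesis by simp
qed

locale rotm2 = rotm +
  assumes Dnz: "p + s - [:c0:] \<noteq> 0" and rnz: "r \<noteq> 0"
  and Dreal: "\<forall>z. poly (cp (p + s - [:c0:])) z = 0 \<longrightarrow> z \<in> \<real>"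
  and rreal: "\<forall>z. poly (cp r) z = 0 \<longrightarrow> z \<in> \<real>"
begin

lemma D_nz: "D \<noteq> 0" using Dnz by (simp add: D_def)

definition "Zs = {x. poly r x = 0} \<union> {x. poly D x = 0}"

lemma Zs_finite: "finite Zs"
  using poly_roots_finite[OF rnz] poly_roots_finite[OF D_nz] by (simp add: Zs_def)

definition Fv :: "real \<Rightarrow> int" where
  "Fv t = int (cntp r t) - int (cntp D t) + (if sgn (poly D t) = sgn (poly r t) then 1 else 0)"

lemma sides:
  fixes P :: "real poly"
  assumes xc: "x < c" "c < y" and nr: "\<forall>u. x \<le> u \<and> u \<le> y \<and> u \<noteq> c \<longrightarrow> poly P u \<noteq> 0"
  shows "poly P c \<noteq> 0 \<Longrightarrow> sgn (poly P x) = sgn (poly P c) \<and> sgn (poly P y) = sgn (poly P c)"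
    "poly P c = 0 \<Longrightarrow> poly (pderiv P) c \<noteq> 0 \<Longrightarrow>
       sgn (poly P y) = sgn (poly (pderiv P) c) \<and> sgn (poly P x) = - sgn (poly (pderiv P) c)"
    "poly P c = 0 \<Longrightarrow> poly (pderiv P) c = 0 \<Longrightarrow> poly (pderiv (pderiv P)) c \<noteq> 0 \<Longrightarrow>
       sgn (poly P y) = sgn (poly (pderiv (pderiv P)) c) \<and> sgn (poly P x) = sgn (poly (pderiv (pderiv P)) c)"
proof -
  assume "poly P c \<noteq> 0"
  then have nrx: "\<forall>u. x \<le> u \<and> u \<le> y \<longrightarrow> poly P u \<noteq> 0" using nr by metis
  show "sgn (poly P x) = sgn (poly P c) \<and> sgn (poly P y) = sgn (poly P c)"
  proof
    show "sgn (poly P x) = sgn (poly P c)"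
      by (rule nr_IVT) (use xc nrx in auto)
    have "sgn (poly P c) = sgn (poly P y)"
      by (rule nr_IVT) (use xc nrx in auto)
    then show "sgn (poly P y) = sgn (poly P c)" by simp
  qed
next
  assume a: "poly P c = 0" "poly (pderiv P) c \<noteq> 0"
  show "sgn (poly P y) = sgn (poly (pderiv P) c) \<and> sgn (poly P x) = - sgn (poly (pderiv P) c)"
    using sr1[OF a xc(2)] sl1[OF a xc(1)] nr xc by auto
next
  assume a: "poly P c = 0" "poly (pderiv P) c = 0" "poly (pderiv (pderiv P)) c \<noteq> 0"
  show "sgn (poly P y) = sgn (poly (pderiv (pderiv P)) c) \<and> sgn (poly P x) = sgn (poly (pderiv (pderiv P)) c)"
    using sr2[OF a xc(2)] sl2[OF a xc(1)] nr xc by auto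
qed

lemma sgn_mult_pos: "(a::real) * b > 0 \<Longrightarrow> sgn a = sgn b"
  by (auto simp: zero_less_mult_iff sgn_if)
lemma sgn_mult_neg: "(a::real) * b < 0 \<Longrightarrow> sgn a = - sgn b"
  by (auto simp: mult_less_0_iff sgn_if)

lemma F1:
  assumes xc: "x < c" "c < y" and cZ: "c \<in> Zs" and nr: "\<forall>u. x \<le> u \<and> u \<le> y \<and> u \<noteq> c \<longrightarrow> u \<notin> Zs"
  shows "Fv x = Fv y"
proof -
  have nrr: "\<forall>u. x \<le> u \<and> u \<le> y \<and> u \<noteq> c \<longrightarrow> poly r u \<noteq> 0" using nr by (auto simp: Zs_def)
  have nrD: "\<forall>u. x \<le> u \<and> u \<le> y \<and> u \<noteq> c \<longrightarrow> poly D u \<noteq> 0" using nr by (auto simp: Zs_def)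
  have cr: "cntp r y = cntp r x + (if poly r c = 0 then order c r else 0)"
    by (rule cnt1[OF rnz xc]) (use nrr in auto)
  have cD: "cntp D y = cntp D x + (if poly D c = 0 then order c D else 0)"
    by (rule cnt1[OF D_nz xc]) (use nrD in auto)
  note sr = sides[OF xc nrr] and sD = sides[OF xc nrD]
  have Dtr: "poly D c = 0 \<Longrightarrow> \<bar>poly p c + poly s c\<bar> \<le> 2" using c0 by (simp add: D_def)
  have key: "Fv y - Fv x = (int (cntp r y) - int (cntp r x)) - (int (cntp D y) - int (cntp D x))
     + ((if sgn (poly D y) = sgn (poly r y) then 1 else 0) - (if sgn (poly D x) = sgn (poly r x) then 1 else 0))"
    by (simp add: Fv_def)
  show ?thesis
  proof (cases "poly r c = 0")
    case False
    then have Dc: "poly D c = 0" using cZ by (simp add: Zs_def)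
    have k2: "poly r c * poly (pderiv D) c > 0" using K2[OF False Dtr[OF Dc]] .
    then have D'0: "poly (pderiv D) c \<noteq> 0" by auto
    have sgD': "sgn (poly (pderiv D) c) = sgn (poly r c)" using sgn_mult_pos[OF k2] by simp
    have o: "order c D = 1" by (rule order1I[OF Dc D'0])
    have rsg: "sgn (poly r c) \<noteq> 0" using False by (simp add: sgn_if)
    have s1: "sgn (poly r x) = sgn (poly r c)" "sgn (poly r y) = sgn (poly r c)" using sr(1)[OF False] by auto
    have s2: "sgn (poly D y) = sgn (poly r c)" "sgn (poly D x) = - sgn (poly r c)"
      using sD(2)[OF Dc D'0] sgD' by auto
    have ex: "(sgn (poly D x) = sgn (poly r x)) = False" using s1 s2 rsg by auto
    have ey: "(sgn (poly D y) = sgn (poly r y)) = True" using s1 s2 by auto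
    have "Fv y - Fv x = 0" unfolding key ex ey using cr cD o False Dc by simp
    then show ?thesis by simp
  next
    case True
    have k3: "poly (pderiv r) c * poly p c < 0" using K3(3)[OF True] .
    then have r'0: "poly (pderiv r) c \<noteq> 0" and p0: "poly p c \<noteq> 0" by auto
    have sr': "sgn (poly (pderiv r) c) = - sgn (poly p c)" using sgn_mult_neg[OF k3] by simp
    have orr: "order c r = 1" by (rule order1I[OF True r'0])
    have psg: "sgn (poly p c) \<noteq> 0" using p0 by (simp add: sgn_if)
    from sr(2)[OF True r'0] sr' have rs: "sgn (poly r y) = - sgn (poly p c)" "sgn (poly r x) = sgn (poly p c)"
      by auto
    have crr: "int (cntp r y) - int (cntp r x) = 1" using cr True orr by simp
    show ?thesis
    proof (cases "poly D c = 0")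
      case False
      have "poly p c * poly D c \<ge> 0" using K3(1)[OF True] .
      then have "poly p c * poly D c > 0" using False p0 by (simp add: less_le)
      then have sgD: "sgn (poly D c) = sgn (poly p c)" using sgn_mult_pos by simp
      have s2: "sgn (poly D x) = sgn (poly p c)" "sgn (poly D y) = sgn (poly p c)"
        using sD(1)[OF False] sgD by auto
      have ex: "(sgn (poly D x) = sgn (poly r x)) = True" using s2 rs by auto
      have ey: "(sgn (poly D y) = sgn (poly r y)) = False" using s2 rs psg by auto
      have "Fv y - Fv x = 0" unfolding key ex ey using crr cD False by simp
      then show ?thesis by simp
    next
      case Dc: True
      show ?thesis
      proof (cases "poly (pderiv D) c = 0")
        case False
        have o: "order c D = 1" by (rule order1I[OF Dc False])
        have s2: "sgn (poly D y) = sgn (poly (pderiv D) c)" "sgn (poly D x) = - sgn (poly (pderiv D) c)"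
          using sD(2)[OF Dc False] by auto
        have "(sgn (poly D x) = sgn (poly r x)) = (sgn (poly D y) = sgn (poly r y))"
          using s2 rs by auto
        then have "Fv y - Fv x = 0" unfolding key using crr cD o Dc by simp
        then show ?thesis by simp
      next
        case D'0: True
        have qc: "poly q c = 0" using K4(1)[OF True Dc] D'0 g11pos[of c] by simp
        have k4: "poly (pderiv (pderiv D)) c * poly p c < 0" using K4(2)[OF True Dc qc] .
        then have D''0: "poly (pderiv (pderiv D)) c \<noteq> 0" by auto
        have sD'': "sgn (poly (pderiv (pderiv D)) c) = - sgn (poly p c)" using sgn_mult_neg[OF k4] by simp
        have o: "order c D = 2" by (rule order2I[OF Dc D'0 D''0])
        have s2: "sgn (poly D y) = - sgn (poly p c)" "sgn (poly D x) = - sgn (poly p c)"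
          using sD(3)[OF Dc D'0 D''0] sD'' by auto
        have ex: "(sgn (poly D x) = sgn (poly r x)) = False" using s2 rs psg by auto
        have ey: "(sgn (poly D y) = sgn (poly r y)) = True" using s2 rs by auto
        have "Fv y - Fv x = 0" unfolding key ex ey using crr cD o Dc by simp
        then show ?thesis by simp
      qed
    qed
  qed
qed


lemma F0:
  assumes "x \<le> y" "\<forall>u. x \<le> u \<and> u \<le> y \<longrightarrow> u \<notin> Zs"
  shows "Fv x = Fv y"
proof -
  have nrr: "\<forall>u. x \<le> u \<and> u \<le> y \<longrightarrow> poly r u \<noteq> 0" using assms by (auto simp: Zs_def)
  have nrD: "\<forall>u. x \<le> u \<and> u \<le> y \<longrightarrow> poly D u \<noteq> 0" using assms by (auto simp: Zs_def)
  have "cntp r y = cntp r x" by (rule cnt0[OF rnz assms(1)]) (use nrr in auto)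
  moreover have "cntp D y = cntp D x" by (rule cnt0[OF D_nz assms(1)]) (use nrD in auto)
  moreover have "sgn (poly r x) = sgn (poly r y)" by (rule nr_IVT[OF assms(1) nrr])
  moreover have "sgn (poly D x) = sgn (poly D y)" by (rule nr_IVT[OF assms(1) nrD])
  ultimately show ?thesis by (simp add: Fv_def)
qed

lemma Fconst_aux:
  "\<forall>x y. x < y \<longrightarrow> x \<notin> Zs \<longrightarrow> y \<notin> Zs \<longrightarrow> card (Zs \<inter> {x<..<y}) = n \<longrightarrow> Fv x = Fv y"
proof (induct n rule: less_induct)
  case (less n)
  show ?case
  proof (intro allI impI)
    fix x y assume xy: "x < y" and xZ: "x \<notin> Zs" and yZ: "y \<notin> Zs" and cd: "card (Zs \<inter> {x<..<y}) = n"
    have fin: "finite (Zs \<inter> A)" for A using Zs_finite by auto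
    show "Fv x = Fv y"
    proof (cases "Zs \<inter> {x<..<y} = {}")
      case True
      show ?thesis by (rule F0) (use xy xZ yZ True in \<open>auto simp: less_le\<close>)
    next
      case False
      define c where "c = Max (Zs \<inter> {x<..<y})"
      have c: "c \<in> Zs" "x < c" "c < y" using Max_in[OF fin False] by (auto simp: c_def)
      have cmax: "u \<le> c" if "u \<in> Zs" "x < u" "u < y" for u
        using Max_ge[OF fin, of u] that by (auto simp: c_def)
      define c' where "c' = Max ((Zs \<inter> {x<..<c}) \<union> {x})"
      have fin2: "finite ((Zs \<inter> {x<..<c}) \<union> {x})" using fin by auto
      have c': "x \<le> c'" "c' < c" "c' = x \<or> c' \<in> Zs"
        using Max_in[OF fin2] Max_ge[OF fin2, of x] c by (auto simp: c'_def)
      have c'max: "u \<le> c'" if "u \<in> Zs" "x < u" "u < c" for u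
        using Max_ge[OF fin2, of u] that by (auto simp: c'_def)
      define z where "z = (c' + c) / 2"
      have z: "c' < z" "z < c" "x < z" using c' by (auto simp: z_def)
      have zZ: "z \<notin> Zs" using c'max[of z] z by auto
      have "Fv z = Fv y"
      proof (rule F1[OF z(2) c(3) c(1)], intro allI impI)
        fix u assume u: "z \<le> u \<and> u \<le> y \<and> u \<noteq> c"
        show "u \<notin> Zs"
        proof
          assume uZ: "u \<in> Zs"
          show False
          proof (cases "u < c")
            case True
            then show False using c'max[OF uZ] z u by auto
          next
            case False
            then have "c < u" using u by auto
            moreover have "u < y" using u yZ uZ by (auto simp: less_le)
            ultimately show False using cmax[OF uZ] c by auto
          qed
        qed
      qed
      moreover have "Fv x = Fv z"
      proof -
        have sub: "Zs \<inter> {x<..<z} \<subseteq> (Zs \<inter> {x<..<y}) - {c}" using z c by auto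
        have "card (Zs \<inter> {x<..<z}) < n"
        proof -
          have "card (Zs \<inter> {x<..<z}) \<le> card ((Zs \<inter> {x<..<y}) - {c})"
            by (rule card_mono) (use fin sub in auto)
          also have "\<dots> < card (Zs \<inter> {x<..<y})"
            using c fin by (intro card_Diff1_less) auto
          finally show ?thesis using cd by simp
        qed
        then show ?thesis using less z xZ zZ by blast
      qed
      ultimately show ?thesis by simp
    qed
  qed
qed

lemma Fconst: "x < y \<Longrightarrow> x \<notin> Zs \<Longrightarrow> y \<notin> Zs \<Longrightarrow> Fv x = Fv y"
  using Fconst_aux by blast

lemma Fconst': assumes "x \<notin> Zs" "y \<notin> Zs" shows "Fv x = Fv y"
proof (cases x y rule: linorder_cases)
  case less then show ?thesis using Fconst assms by blast
next
  case equal then show ?thesis by simp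
next
  case greater then show ?thesis using Fconst[of y x] assms by simp
qed

lemma exists_below: "\<exists>x. \<forall>u\<in>Zs. x < u"
proof (cases "Zs = {}")
  case True then show ?thesis by auto
next
  case False
  have "\<forall>u\<in>Zs. Min Zs - 1 < u"
  proof
    fix u assume "u \<in> Zs"
    then have "Min Zs \<le> u" by (rule Min_le[OF Zs_finite])
    then show "Min Zs - 1 < u" by simp
  qed
  then show ?thesis by blast
qed

lemma exists_above: "\<exists>x. \<forall>u\<in>Zs. u < x"
proof (cases "Zs = {}")
  case True then show ?thesis by auto
next
  case False
  have "\<forall>u\<in>Zs. u < Max Zs + 1"
  proof
    fix u assume "u \<in> Zs"
    then have "u \<le> Max Zs" by (rule Max_ge[OF Zs_finite])
    then show "u < Max Zs + 1" by simp
  qed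
  then show ?thesis by blast
qed

lemma cnt_low: assumes "P \<noteq> 0" "\<forall>u. poly P u = 0 \<longrightarrow> t < u" shows "cntp P t = 0"
proof -
  have e: "{x. poly P x = 0 \<and> x \<le> t} = {}" using assms by force
  show ?thesis unfolding cntp_def e by simp
qed

lemma cnt_high: assumes "P \<noteq> 0" "\<forall>u. poly P u = 0 \<longrightarrow> u \<le> t" "\<forall>z. poly (cp P) z = 0 \<longrightarrow> z \<in> \<real>"
  shows "cntp P t = degree P"
proof -
  have e: "{x. poly P x = 0 \<and> x \<le> t} = {x. poly P x = 0}" using assms by auto
  show ?thesis unfolding cntp_def e using realcnt[OF assms(1,3)] .
qed

theorem ABS:
  defines "F0 \<equiv> int (degree r) - int (degree D) + (if sgn (lead_coeff D) = sgn (lead_coeff r) then 1 else 0)"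
  shows "F0 \<in> {0, 1}" "\<forall>t. int (cntp r t) - int (cntp D t) \<in> {F0 - 1, F0}"
proof -
  obtain a where a: "\<forall>u\<in>Zs. a < u" using exists_below by blast
  obtain b where b: "\<forall>u\<in>Zs. u < b" using exists_above by blast
  have aZ: "a \<notin> Zs" and bZ: "b \<notin> Zs" using a b by auto
  have Fa: "Fv a \<in> {0, 1}"
  proof -
    have "cntp r a = 0" by (rule cnt_low[OF rnz]) (use a in \<open>auto simp: Zs_def\<close>)
    moreover have "cntp D a = 0" by (rule cnt_low[OF D_nz]) (use a in \<open>auto simp: Zs_def\<close>)
    ultimately show ?thesis by (simp add: Fv_def)
  qed
  have bb: "poly r u \<noteq> 0 \<and> poly D u \<noteq> 0" if "b \<le> u" for u
  proof -
    have "u \<notin> Zs" using b that by force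
    then show ?thesis by (simp add: Zs_def)
  qed
  have Fb: "Fv b = F0"
  proof -
    have "cntp r b = degree r" by (rule cnt_high[OF rnz _ rreal]) (use b in \<open>auto simp: Zs_def less_imp_le\<close>)
    moreover have "cntp D b = degree D"
      by (rule cnt_high[OF D_nz]) (use b Dreal in \<open>auto simp: Zs_def less_imp_le D_def\<close>)
    moreover have "sgn (poly r b) = sgn (lead_coeff r)"
      by (rule sgn_pinf[OF rnz]) (use bb in auto)
    moreover have "sgn (poly D b) = sgn (lead_coeff D)"
      by (rule sgn_pinf[OF D_nz]) (use bb in auto)
    ultimately show ?thesis by (simp add: Fv_def F0_def)
  qed
  have FF: "Fv x = F0" if "x \<notin> Zs" for x using Fconst'[OF that bZ] Fb by simp
  show "F0 \<in> {0, 1}" using FF[OF aZ] Fa by simp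
  show "\<forall>t. int (cntp r t) - int (cntp D t) \<in> {F0 - 1, F0}"
  proof
    fix t
    obtain y where y: "t < y" "\<forall>u. t < u \<and> u \<le> y \<longrightarrow> u \<notin> Zs"
    proof (cases "Zs \<inter> {t<..} = {}")
      case True then show ?thesis using that[of "t + 1"] by auto
    next
      case False
      have fin: "finite (Zs \<inter> {t<..})" using Zs_finite by auto
      define m where "m = Min (Zs \<inter> {t<..})"
      have m: "t < m" "\<forall>u\<in>Zs. t < u \<longrightarrow> m \<le> u" using Min_in[OF fin False] Min_le[OF fin] by (auto simp: m_def)
      show ?thesis by (rule that[of "(t + m) / 2"]) (use m in force)+
    qed
    have yZ: "y \<notin> Zs" using y by auto
    have "cntp r y = cntp r t" by (rule cnt0[OF rnz]) (use y in \<open>auto simp: Zs_def\<close>)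
    moreover have "cntp D y = cntp D t" by (rule cnt0[OF D_nz]) (use y in \<open>auto simp: Zs_def\<close>)
    moreover have "Fv y = F0" using FF[OF yZ] .
    ultimately show "int (cntp r t) - int (cntp D t) \<in> {F0 - 1, F0}"
      by (auto simp: Fv_def split: if_splits)
  qed
qed

end

locale slp =
  fixes N :: nat and f q w :: "nat \<Rightarrow> real"
  assumes N2: "N \<ge> 2" and fnz: "\<forall>n\<le>N. f n \<noteq> 0" and wpos: "\<forall>n\<in>{1..N}. w n > 0"
begin

fun sq :: "real \<Rightarrow> real \<Rightarrow> nat \<Rightarrow> real poly \<times> real poly" where
  "sq x y 0 = ([:x:], [:y:])"
| "sq x y (Suc n) = (let a = fst (sq x y n) + smult (1 / f n) (snd (sq x y n))
                     in (a, snd (sq x y n) + [:q (Suc n), - w (Suc n):] * a))"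

definition "PA x y n = fst (sq x y n)"
definition "PB x y n = snd (sq x y n)"

lemma PA_0[simp]: "PA x y 0 = [:x:]" and PB_0[simp]: "PB x y 0 = [:y:]"
  by (simp_all add: PA_def PB_def)

lemma PA_Suc: "PA x y (Suc n) = PA x y n + smult (1 / f n) (PB x y n)"
  by (simp add: PA_def PB_def Let_def)
lemma PB_Suc: "PB x y (Suc n) = PB x y n + [:q (Suc n), - w (Suc n):] * PA x y (Suc n)"
  by (simp add: PA_def PB_def Let_def)

lemma PAB_lin: "PA x y n = smult x (PA 1 0 n) + smult y (PA 0 1 n) \<and>
                PB x y n = smult x (PB 1 0 n) + smult y (PB 0 1 n)"
proof (induct n)
  case 0 then show ?case by (simp add: poly_eq_iff)
next
  case (Suc n)
  define l where "l = [:q (Suc n), - w (Suc n):]"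
  have A: "PA x y (Suc n) = smult x (PA 1 0 (Suc n)) + smult y (PA 0 1 (Suc n))"
    using Suc by (intro poly_ext) (simp add: PA_Suc algebra_simps)
  have "PB x y (Suc n) = PB x y n + l * PA x y (Suc n)" by (simp add: PB_Suc l_def)
  also have "\<dots> = smult x (PB 1 0 n + l * PA 1 0 (Suc n)) + smult y (PB 0 1 n + l * PA 0 1 (Suc n))"
    using Suc A by (intro poly_ext) (simp add: algebra_simps)
  also have "\<dots> = smult x (PB 1 0 (Suc n)) + smult y (PB 0 1 (Suc n))"
    by (simp add: PB_Suc l_def)
  finally show ?case using A by simp
qed

lemma wronski:
  "PA x y n * pderiv (PB x y n) - PB x y n * pderiv (PA x y n)
   = - (\<Sum>k\<in>{1..n}. smult (w k) (PA x y k ^ 2))"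
proof (induct n)
  case 0 then show ?case by simp
next
  case (Suc n)
  define a where "a = PA x y n"
  define b where "b = PB x y n"
  define a' where "a' = PA x y (Suc n)"
  define l where "l = [:q (Suc n), - w (Suc n):]"
  have a': "a' = a + smult (1 / f n) b" by (simp add: a_def b_def a'_def PA_Suc)
  have b': "PB x y (Suc n) = b + l * a'" by (simp add: b_def l_def a'_def PB_Suc)
  have pl: "pderiv l = [:- w (Suc n):]" by (simp add: l_def pderiv_pCons)
  have "a' * pderiv (b + l * a') - (b + l * a') * pderiv a'
      = (a * pderiv b - b * pderiv a) - smult (w (Suc n)) (a' ^ 2)"
    unfolding a' by (intro poly_ext) (simp add: pderiv_add pderiv_mult pderiv_smult pl algebra_simps power2_eq_square)
  then show ?case using Suc
    by (simp add: b' a'_def a_def b_def)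
qed

end

lemma wr_lin:
  fixes u1 u2 :: "real poly"
  shows "(smult g u1 + smult d u2) * pderiv (smult a u1 + smult b u2)
        - (smult a u1 + smult b u2) * pderiv (smult g u1 + smult d u2)
       = smult (a * d - b * g) (u2 * pderiv u1 - u1 * pderiv u2)"
  by (intro poly_ext) (simp add: pderiv_add pderiv_smult algebra_simps)

context slp
begin

lemma detM: "PA 1 0 n * PB 0 1 n - PA 0 1 n * PB 1 0 n = 1"
proof (induct n)
  case 0 then show ?case by simp
next
  case (Suc n)
  define l where "l = [:q (Suc n), - w (Suc n):]"
  have "PA 1 0 (Suc n) * PB 0 1 (Suc n) - PA 0 1 (Suc n) * PB 1 0 (Suc n)
      = PA 1 0 n * PB 0 1 n - PA 0 1 n * PB 1 0 n"
    unfolding PB_Suc PA_Suc l_def[symmetric]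
    by (intro poly_ext) (simp add: algebra_simps)
  then show ?case using Suc by simp
qed

lemma fpos: "n \<le> N \<Longrightarrow> f n \<noteq> 0" using fnz by auto
lemma wp: "1 \<le> n \<Longrightarrow> n \<le> N \<Longrightarrow> w n > 0" using wpos by auto

lemma a12_nz:
  assumes "(x, y) \<noteq> (0, 0)"
  shows "poly (PA x y 1) t \<noteq> 0 \<or> poly (PA x y 2) t \<noteq> 0"
proof -
  have f0: "f 0 \<noteq> 0" and f1: "f 1 \<noteq> 0" using fpos N2 by auto
  have a1: "poly (PA x y 1) t = x + y / f 0" by (simp add: PA_Suc[of x y 0])
  have b1: "poly (PB x y 1) t = y + (q 1 - w 1 * t) * (x + y / f 0)"
    by (simp add: PB_Suc[of x y 0] PA_Suc[of x y 0] algebra_simps)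
  have a2: "poly (PA x y 2) t = poly (PA x y 1) t + poly (PB x y 1) t / f 1"
  proof -
    have "PA x y 2 = PA x y 1 + smult (1 / f 1) (PB x y 1)" using PA_Suc[of x y 1] by (simp add: numeral_2_eq_2)
    then show ?thesis by (simp add: divide_inverse mult.commute)
  qed
  show ?thesis
  proof (cases "x + y / f 0 = 0")
    case True
    then have "y \<noteq> 0" using assms f0 by auto
    then show ?thesis using a1 a2 b1 True f1 by simp
  next
    case False then show ?thesis using a1 by simp
  qed
qed

lemma Mrot:
  assumes "(x, y) \<noteq> (0, 0)"
  shows "poly (PB x y N * pderiv (PA x y N) - PA x y N * pderiv (PB x y N)) t > 0"
proof -
  have "PB x y N * pderiv (PA x y N) - PA x y N * pderiv (PB x y N)
        = (\<Sum>k\<in>{1..N}. smult (w k) (PA x y k ^ 2))"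
    using wronski[of x y N] by (simp add: algebra_simps)
  then have e: "poly (PB x y N * pderiv (PA x y N) - PA x y N * pderiv (PB x y N)) t
      = (\<Sum>k\<in>{1..N}. w k * (poly (PA x y k) t)^2)"
    by (simp add: poly_sum)
  have nn: "\<forall>k\<in>{1..N}. 0 \<le> w k * (poly (PA x y k) t)^2"
  proof
    fix k assume "k \<in> {1..N}"
    then have "w k > 0" using wp by auto
    then show "0 \<le> w k * (poly (PA x y k) t)^2" by simp
  qed
  obtain k where k: "k \<in> {1..N}" "poly (PA x y k) t \<noteq> 0"
    using a12_nz[OF assms, of t] N2 by (metis atLeastAtMost_iff le_numeral_extra(4) one_le_numeral order.trans)
  have "0 < w k * (poly (PA x y k) t)^2" using k wp by simp
  also have "\<dots> \<le> (\<Sum>k\<in>{1..N}. w k * (poly (PA x y k) t)^2)"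
    by (rule member_le_sum) (use k nn in auto)
  finally show ?thesis using e by simp
qed

end

context slp
begin

definition "m11 = PA 1 0 N"
definition "m21 = PB 1 0 N"
definition "m12 = PA 0 1 N"
definition "m22 = PB 0 1 N"

lemma PA_N: "PA x y N = smult x m11 + smult y m12" unfolding m11_def m12_def by (rule conjunct1[OF PAB_lin])
lemma PB_N: "PB x y N = smult x m21 + smult y m22" unfolding m21_def m22_def by (rule conjunct2[OF PAB_lin])

lemma detMN: "m11 * m22 - m12 * m21 = 1" using detM[of N] by (simp add: m11_def m12_def m21_def m22_def)

lemma rotT:
  assumes SL: "k11 * k22 - k12 * k21 = 1" and c0: "\<bar>c0\<bar> \<le> 2"
  shows "rotm (smult k22 m11 - smult k12 m21) (smult k22 m12 - smult k12 m22)
              (smult (-k21) m11 + smult k11 m21) (smult (-k21) m12 + smult k11 m22) c0"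
proof
  have "(smult k22 m11 - smult k12 m21) * (smult (-k21) m12 + smult k11 m22) -
    (smult k22 m12 - smult k12 m22) * (smult (-k21) m11 + smult k11 m21)
    = smult (k11 * k22 - k12 * k21) (m11 * m22 - m12 * m21)"
    by (intro poly_ext) (simp add: algebra_simps)
  then show "(smult k22 m11 - smult k12 m21) * (smult (-k21) m12 + smult k11 m22) -
    (smult k22 m12 - smult k12 m22) * (smult (-k21) m11 + smult k11 m21) = 1"
    using SL detMN by simp
  show "\<bar>c0\<bar> \<le> 2" by fact
  fix t a b :: real assume ab: "(a, b) \<noteq> (0, 0)"
  have e1: "smult a (smult k22 m11 - smult k12 m21) + smult b (smult k22 m12 - smult k12 m22)
     = smult k22 (PA a b N) + smult (- k12) (PB a b N)"
    by (intro poly_ext) (simp add: PA_N PB_N algebra_simps)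
  have e2: "smult a (smult (-k21) m11 + smult k11 m21) + smult b (smult (-k21) m12 + smult k11 m22)
     = smult (-k21) (PA a b N) + smult k11 (PB a b N)"
    by (intro poly_ext) (simp add: PA_N PB_N algebra_simps)
  show "poly ((smult a (smult (-k21) m11 + smult k11 m21) + smult b (smult (-k21) m12 + smult k11 m22)) *
      pderiv (smult a (smult k22 m11 - smult k12 m21) + smult b (smult k22 m12 - smult k12 m22)) -
     (smult a (smult k22 m11 - smult k12 m21) + smult b (smult k22 m12 - smult k12 m22)) *
      pderiv (smult a (smult (-k21) m11 + smult k11 m21) + smult b (smult (-k21) m12 + smult k11 m22))) t > 0"
    unfolding e1 e2 wr_lin using Mrot[OF ab, of t] SL by (simp add: algebra_simps)
qed

lemma rotU:
  assumes SL: "k11 * k22 - k12 * k21 = 1" and c0: "\<bar>c0\<bar> \<le> 2"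
  shows "rotm (smult (-k12) m21 + smult k11 m22) (smult (-k22) m21 + smult k21 m22)
              (smult k12 m11 + smult (-k11) m12) (smult k22 m11 + smult (-k21) m12) c0"
proof
  have "(smult (-k12) m21 + smult k11 m22) * (smult k22 m11 + smult (-k21) m12) -
    (smult (-k22) m21 + smult k21 m22) * (smult k12 m11 + smult (-k11) m12)
    = smult (k11 * k22 - k12 * k21) (m11 * m22 - m12 * m21)"
    by (intro poly_ext) (simp add: algebra_simps)
  then show "(smult (-k12) m21 + smult k11 m22) * (smult k22 m11 + smult (-k21) m12) -
    (smult (-k22) m21 + smult k21 m22) * (smult k12 m11 + smult (-k11) m12) = 1"
    using SL detMN by simp
  show "\<bar>c0\<bar> \<le> 2" by fact
  fix t a b :: real assume ab: "(a, b) \<noteq> (0, 0)"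
  define e1 where "e1 = - a * k12 - b * k22"
  define e2 where "e2 = a * k11 + b * k21"
  have ne: "(e1, e2) \<noteq> (0, 0)"
  proof
    assume "(e1, e2) = (0, 0)"
    then have z: "- a * k12 - b * k22 = 0" "a * k11 + b * k21 = 0" by (auto simp: e1_def e2_def)
    have "a = a * (k11 * k22 - k12 * k21)" using SL by simp
    also have "\<dots> = k22 * (a * k11 + b * k21) + k21 * (- a * k12 - b * k22)" by (simp add: algebra_simps)
    finally have "a = 0" using z by simp
    have "b = b * (k11 * k22 - k12 * k21)" using SL by simp
    also have "\<dots> = - k12 * (a * k11 + b * k21) - k11 * (- a * k12 - b * k22)" by (simp add: algebra_simps)
    finally have "b = 0" using z by simp
    with \<open>a = 0\<close> ab show False by simp
  qed
  have x1: "smult a (smult (-k12) m21 + smult k11 m22) + smult b (smult (-k22) m21 + smult k21 m22)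
     = smult 0 (PA e1 e2 N) + smult 1 (PB e1 e2 N)"
    by (intro poly_ext) (simp add: PA_N PB_N e1_def e2_def algebra_simps)
  have x2: "smult a (smult k12 m11 + smult (-k11) m12) + smult b (smult k22 m11 + smult (-k21) m12)
     = smult (-1) (PA e1 e2 N) + smult 0 (PB e1 e2 N)"
    by (intro poly_ext) (simp add: PA_N PB_N e1_def e2_def algebra_simps)
  show "poly ((smult a (smult k12 m11 + smult (-k11) m12) + smult b (smult k22 m11 + smult (-k21) m12)) *
      pderiv (smult a (smult (-k12) m21 + smult k11 m22) + smult b (smult (-k22) m21 + smult k21 m22)) -
     (smult a (smult (-k12) m21 + smult k11 m22) + smult b (smult (-k22) m21 + smult k21 m22)) *
      pderiv (smult a (smult k12 m11 + smult (-k11) m12) + smult b (smult k22 m11 + smult (-k21) m12))) t > 0"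
    unfolding x1 x2 wr_lin using Mrot[OF ne, of t] by simp
qed

end

lemma degree_eqI': "degree p \<le> d \<Longrightarrow> coeff p d \<noteq> 0 \<Longrightarrow> degree p = d"
  by (meson antisym le_degree)

context slp
begin

lemma deg_ind:
  assumes n0: "1 \<le> n0" "n0 \<le> n" "n \<le> N"
  and b: "degree (PA x y n0) \<le> d0" "coeff (PA x y n0) d0 = c"
         "degree (PB x y n0) \<le> Suc d0" "coeff (PB x y n0) (Suc d0) = - c * w n0"
  shows "degree (PA x y n) \<le> d0 + (n - n0) \<and> coeff (PA x y n) (d0 + (n - n0)) = c * (\<Prod>k\<in>{n0..<n}. - w k / f k)
    \<and> degree (PB x y n) \<le> Suc (d0 + (n - n0))
    \<and> coeff (PB x y n) (Suc (d0 + (n - n0))) = - c * (\<Prod>k\<in>{n0..<n}. - w k / f k) * w n"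
  using n0(2,3)
proof (induct n rule: dec_induct)
  case base then show ?case using b by simp
next
  case (step n)
  define e where "e = d0 + (n - n0)"
  define Pr where "Pr = (\<Prod>k\<in>{n0..<n}. - w k / f k)"
  have IH: "degree (PA x y n) \<le> e" "coeff (PA x y n) e = c * Pr" "degree (PB x y n) \<le> Suc e"
     "coeff (PB x y n) (Suc e) = - c * Pr * w n" using step by (auto simp: e_def Pr_def)
  have fn: "f n \<noteq> 0" using fnz step by auto
  have e': "d0 + (Suc n - n0) = Suc e" using step by (simp add: e_def)
  have Pr': "(\<Prod>k\<in>{n0..<Suc n}. - w k / f k) = Pr * (- w n / f n)"
    using step by (simp add: Pr_def prod.atLeastLessThan_Suc)
  have A: "PA x y (Suc n) = PA x y n + smult (1 / f n) (PB x y n)" by (rule PA_Suc)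
  have dA: "degree (PA x y (Suc n)) \<le> Suc e"
    unfolding A using IH by (intro degree_add_le) (auto intro: le_trans[OF degree_smult_le])
  have cA: "coeff (PA x y (Suc n)) (Suc e) = c * Pr * (- w n / f n)"
  proof -
    have "coeff (PA x y n) (Suc e) = 0" using IH(1) by (simp add: coeff_eq_0)
    then show ?thesis unfolding A using IH(4) fn by (simp add: field_simps)
  qed
  have B: "PB x y (Suc n) = PB x y n + smult (q (Suc n)) (PA x y (Suc n)) + pCons 0 (smult (- w (Suc n)) (PA x y (Suc n)))"
    by (simp add: PB_Suc mult_pCons_left)
  have dB: "degree (PB x y (Suc n)) \<le> Suc (Suc e)"
    unfolding B using IH dA
    by (intro degree_add_le) (auto intro: le_trans[OF degree_smult_le] simp: degree_pCons_le le_SucI)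
  have cB: "coeff (PB x y (Suc n)) (Suc (Suc e)) = - (c * Pr * (- w n / f n)) * w (Suc n)"
  proof -
    have "coeff (PB x y n) (Suc (Suc e)) = 0" using IH(3) by (simp add: coeff_eq_0)
    moreover have "coeff (PA x y (Suc n)) (Suc (Suc e)) = 0" using dA by (simp add: coeff_eq_0)
    ultimately show ?thesis unfolding B using cA by simp
  qed
  show ?case unfolding e' Pr' using dA cA dB cB by (simp add: algebra_simps)
qed

definition "Pi1 = (\<Prod>k\<in>{1..<N}. - w k / f k)"
definition "Pi2 = (\<Prod>k\<in>{2..<N}. - w k / f k)"

lemma Pi_nz: "1 \<le> a \<Longrightarrow> (\<Prod>k\<in>{a..<N}. - w k / f k) \<noteq> 0"
  using fnz wpos by (auto simp: prod_zero_iff) (metis atLeastAtMost_iff less_imp_le order.strict_trans2 order.trans less_irrefl)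

lemma Pi1_nz: "Pi1 \<noteq> 0" unfolding Pi1_def by (rule Pi_nz) simp
lemma Pi2_nz: "Pi2 \<noteq> 0" unfolding Pi2_def by (rule Pi_nz) simp
lemma Pi12: "Pi1 = (- w 1 / f 1) * Pi2"
  using N2 unfolding Pi1_def Pi2_def by (simp add: prod.atLeast_Suc_lessThan numeral_2_eq_2)

lemma deg_case1:
  assumes "x + y / f 0 \<noteq> 0"
  shows "degree (PA x y N) \<le> N - 1" "coeff (PA x y N) (N - 1) = (x + y / f 0) * Pi1"
        "degree (PB x y N) = N" "coeff (PB x y N) N = - (x + y / f 0) * Pi1 * w N"
proof -
  have A1: "PA x y 1 = [:x + y / f 0:]" by (simp add: PA_Suc[of x y 0])
  have B1: "PB x y 1 = [:y:] + smult (q 1) (PA x y 1) + pCons 0 (smult (- w 1) (PA x y 1))"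
    using PB_Suc[of x y 0] by (simp add: mult_pCons_left)
  have b: "degree (PA x y 1) \<le> 0" "coeff (PA x y 1) 0 = x + y / f 0"
     "degree (PB x y 1) \<le> Suc 0" "coeff (PB x y 1) (Suc 0) = - (x + y / f 0) * w 1"
    using A1 B1 by (auto simp: degree_add_le algebra_simps)
  note r = deg_ind[of 1 N, OF _ _ _ b] N2
  have NN: "0 + (N - 1) = N - 1" "Suc (N - 1) = N" using N2 by auto
  show "degree (PA x y N) \<le> N - 1" "coeff (PA x y N) (N - 1) = (x + y / f 0) * Pi1"
    using r by (auto simp: NN Pi1_def)
  have cB: "coeff (PB x y N) N = - (x + y / f 0) * Pi1 * w N" using r by (auto simp: NN Pi1_def)
  then show "coeff (PB x y N) N = - (x + y / f 0) * Pi1 * w N" .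
  have "degree (PB x y N) \<le> N" using r by (auto simp: NN)
  moreover have "coeff (PB x y N) N \<noteq> 0" using cB assms Pi1_nz wp[of N] N2 by simp
  ultimately show "degree (PB x y N) = N" by (rule degree_eqI')
qed

lemma deg_case2:
  assumes "x + y / f 0 = 0"
  shows "degree (PA x y N) \<le> N - 2" "coeff (PA x y N) (N - 2) = (y / f 1) * Pi2"
        "degree (PB x y N) \<le> N - 1" "coeff (PB x y N) (N - 1) = - (y / f 1) * Pi2 * w N"
proof -
  have A1: "PA x y 1 = 0" using assms by (simp add: PA_Suc[of x y 0])
  have B1: "PB x y 1 = [:y:]" using PB_Suc[of x y 0] A1 by simp
  have A2: "PA x y 2 = [:y / f 1:]" using PA_Suc[of x y 1] A1 B1 by (simp add: numeral_2_eq_2)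
  have B2: "PB x y 2 = [:y:] + smult (q 2) (PA x y 2) + pCons 0 (smult (- w 2) (PA x y 2))"
    using PB_Suc[of x y 1] B1 by (simp add: mult_pCons_left numeral_2_eq_2)
  have b: "degree (PA x y 2) \<le> 0" "coeff (PA x y 2) 0 = y / f 1"
     "degree (PB x y 2) \<le> Suc 0" "coeff (PB x y 2) (Suc 0) = - (y / f 1) * w 2"
    using A2 B2 by (auto simp: degree_add_le)
  note r = deg_ind[of 2 N, OF _ _ _ b] N2
  have NN: "0 + (N - 2) = N - 2" "Suc (N - 2) = N - 1" using N2 by auto
  show "degree (PA x y N) \<le> N - 2" "coeff (PA x y N) (N - 2) = (y / f 1) * Pi2"
       "degree (PB x y N) \<le> N - 1" "coeff (PB x y N) (N - 1) = - (y / f 1) * Pi2 * w N"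
    using r by (auto simp: NN Pi2_def)
qed

end

locale slpK = slp +
  fixes k11 k12 k21 k22 \<gamma> :: real
  assumes SL: "k11 * k22 - k12 * k21 = 1" and gam: "-pi < \<gamma>" "\<gamma> \<le> pi"
begin

definition "rT = smult (-k21) m11 + smult k11 m21"
definition "rU = smult k12 m11 + smult (-k11) m12"
definition "c0 = 2 * cos \<gamma>"
definition "pT = smult k22 m11 - smult k12 m21"
definition "qT = smult k22 m12 - smult k12 m22"
definition "sT = smult (-k21) m12 + smult k11 m22"
definition "pU = smult (-k12) m21 + smult k11 m22"
definition "qU = smult (-k22) m21 + smult k21 m22"
definition "sU = smult k22 m11 + smult (-k21) m12"
definition "DD = pT + sT - [:c0:]"
definition "cc = k11 - f 0 * k12"

lemma c0_le: "\<bar>c0\<bar> \<le> 2" using abs_cos_le_one[of \<gamma>] by (simp add: c0_def abs_mult)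

lemma coeff_const0: "n \<noteq> 0 \<Longrightarrow> coeff [:c:] n = 0" by (cases n) auto

lemma DU: "pU + sU - [:c0:] = DD"
  unfolding DD_def pU_def sU_def pT_def sT_def by (intro poly_ext) (simp add: algebra_simps)

lemma DD_alt: "DD = PA k22 (-k21) N + PB (-k12) k11 N - [:c0:]"
  unfolding DD_def pT_def sT_def PA_N PB_N by (intro poly_ext) (simp add: algebra_simps)

lemma rU_alt: "rU = PA k12 (-k11) N"
  unfolding rU_def PA_N by simp

lemma rT_alt: "rT = smult (-k21) (PA 1 0 N) + smult k11 (PB 1 0 N)"
  unfolding rT_def m11_def m21_def ..

lemma f0: "f 0 \<noteq> 0" using fnz by auto
lemma f1: "f 1 \<noteq> 0" using fnz N2 by auto
lemma wN: "w N > 0" using wpos N2 by auto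
lemma w1: "w 1 > 0" using wpos N2 by auto

lemma k21_nz_if: "k11 = 0 \<Longrightarrow> k21 \<noteq> 0" using SL by auto
lemma k12_nz_if: "cc = 0 \<Longrightarrow> k12 \<noteq> 0" using SL by (auto simp: cc_def)
lemma k11_nz_if: "cc = 0 \<Longrightarrow> k11 \<noteq> 0" using SL f0 by (auto simp: cc_def)

lemma d1: assumes "k11 \<noteq> 0" shows "degree rT = N" "lead_coeff rT = - k11 * Pi1 * w N"
proof -
  note c = deg_case1[of 1 0]
  have "coeff (PA 1 0 N) N = 0" using c(1) N2 by (intro coeff_eq_0) auto
  then have cN: "coeff rT N = - k11 * Pi1 * w N" using c(4) by (simp add: rT_alt)
  have "degree rT \<le> N" unfolding rT_alt using c(1,3) N2
    by (intro degree_add_le) (auto intro: le_trans[OF degree_smult_le])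
  moreover have "coeff rT N \<noteq> 0" using cN assms Pi1_nz wN by simp
  ultimately show dg: "degree rT = N" by (rule degree_eqI')
  show "lead_coeff rT = - k11 * Pi1 * w N" using dg cN by simp
qed

lemma d2: assumes "k11 = 0" shows "degree rT = N - 1"
proof -
  note c = deg_case1[of 1 0]
  have r: "rT = smult (-k21) (PA 1 0 N)" unfolding rT_alt using assms by simp
  have "degree rT \<le> N - 1" unfolding r using c(1) by (auto intro: le_trans[OF degree_smult_le])
  moreover have "coeff rT (N - 1) \<noteq> 0" unfolding r using c(2) Pi1_nz k21_nz_if[OF assms] by simp
  ultimately show ?thesis by (rule degree_eqI')
qed

lemma d3: assumes "cc \<noteq> 0" shows "degree DD = N" "lead_coeff DD = - (cc / f 0) * Pi1 * w N"
proof -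
  have a1: "-k12 + k11 / f 0 = cc / f 0" using f0 by (simp add: cc_def field_simps)
  note c = deg_case1[of "-k12" k11, unfolded a1]
  have ccf: "cc / f 0 \<noteq> 0" using assms f0 by simp
  have dA: "degree (PA k22 (-k21) N) \<le> N - 1"
  proof (cases "k22 + - k21 / f 0 = 0")
    case True then show ?thesis using deg_case2[OF True] by simp
  next
    case False then show ?thesis using deg_case1[OF False] by simp
  qed
  have "coeff (PA k22 (-k21) N) N = 0" using dA N2 by (intro coeff_eq_0) auto
  then have cN: "coeff DD N = - (cc / f 0) * Pi1 * w N"
    using c(4)[OF ccf] N2 by (simp add: DD_alt coeff_const0)
  have "degree DD \<le> N" unfolding DD_alt using dA c(3)[OF ccf] N2
    by (intro degree_diff_le degree_add_le) auto
  moreover have "coeff DD N \<noteq> 0" using cN ccf Pi1_nz wN by simp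
  ultimately show dg: "degree DD = N" by (rule degree_eqI')
  show "lead_coeff DD = - (cc / f 0) * Pi1 * w N" using dg cN by simp
qed

lemma d4: assumes "cc = 0" shows "degree DD = N - 1"
proof -
  have a1: "-k12 + k11 / f 0 = 0" using f0 assms by (simp add: cc_def field_simps)
  note cB = deg_case2[OF a1]
  have k12: "k12 \<noteq> 0" by (rule k12_nz_if[OF assms])
  have k11: "k11 = f 0 * k12" using assms by (simp add: cc_def)
  have a1': "k22 + - k21 / f 0 = 1 / (f 0 * k12)"
  proof -
    have "k12 * (f 0 * k22 - k21) = 1" using SL k11 by (simp add: algebra_simps)
    then have h: "f 0 * k22 - k21 = 1 / k12" using k12 by (simp add: field_simps)
    have "k22 + - k21 / f 0 = (f 0 * k22 - k21) / f 0" using f0 by (simp add: field_simps)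
    also have "\<dots> = 1 / (f 0 * k12)" using h by simp
    finally show ?thesis .
  qed
  have a1'nz: "k22 + - k21 / f 0 \<noteq> 0" using a1' f0 k12 by simp
  note cA = deg_case1[OF a1'nz]
  have dg: "degree DD \<le> N - 1" unfolding DD_alt using cA(1) cB(3) N2
    by (intro degree_diff_le degree_add_le) auto
  have cN: "coeff DD (N - 1) = (1 / (f 0 * k12)) * Pi1 - (k11 / f 1) * Pi2 * w N"
    using cA(2) cB(4) N2 a1' by (simp add: DD_alt coeff_const0)
  also have "\<dots> = - (Pi2 / (f 1 * f 0 * k12)) * (w 1 + (f 0 * k12)^2 * w N)"
    using f0 f1 k12 unfolding Pi12 k11 by (simp add: field_simps power2_eq_square)
  finally have cN': "coeff DD (N - 1) = - (Pi2 / (f 1 * f 0 * k12)) * (w 1 + (f 0 * k12)^2 * w N)" .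
  have "w 1 + (f 0 * k12)^2 * w N > 0" using w1 wN by (simp add: add_pos_nonneg)
  then have "coeff DD (N - 1) \<noteq> 0" unfolding cN' using Pi2_nz f0 f1 k12 by simp
  with dg show ?thesis by (rule degree_eqI')
qed

lemma d5: assumes "cc \<noteq> 0" shows "degree rU = N - 1"
proof -
  have a1: "k12 + - k11 / f 0 = - (cc / f 0)" using f0 by (simp add: cc_def field_simps)
  have a1nz: "k12 + - k11 / f 0 \<noteq> 0" using a1 assms f0 by simp
  note c = deg_case1[OF a1nz]
  have "coeff rU (N - 1) \<noteq> 0" unfolding rU_alt c(2) using a1nz Pi1_nz by simp
  with c(1) show ?thesis unfolding rU_alt by (rule degree_eqI')
qed

lemma d6: assumes "cc = 0" shows "degree rU = N - 2"
proof -
  have a1: "k12 + - k11 / f 0 = 0" using f0 assms by (simp add: cc_def field_simps)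
  note c = deg_case2[OF a1]
  have "coeff rU (N - 2) \<noteq> 0" unfolding rU_alt c(2) using k11_nz_if[OF assms] f1 Pi2_nz by simp
  with c(1) show ?thesis unfolding rU_alt by (rule degree_eqI')
qed

lemma DD_nz: "DD \<noteq> 0"
proof
  assume "DD = 0"
  then have "degree DD = 0" by simp
  then show False using d3 d4 N2 by (cases "cc = 0") auto
qed

lemma rT_nz: "rT \<noteq> 0"
proof
  assume "rT = 0"
  then have "degree rT = 0" "lead_coeff rT = 0" by simp_all
  then show False using d1 d2 N2 Pi1_nz wN by (cases "k11 = 0") auto
qed

lemma rU_nz: "rU \<noteq> 0"
proof
  assume z: "rU = 0"
  show False
  proof (cases "cc = 0")
    case True
    have a1: "k12 + - k11 / f 0 = 0" using f0 True by (simp add: cc_def field_simps)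
    have "coeff rU (N - 2) \<noteq> 0" unfolding rU_alt deg_case2(2)[OF a1] using k11_nz_if[OF True] f1 Pi2_nz by simp
    then show False using z by simp
  next
    case False
    have a1nz: "k12 + - k11 / f 0 \<noteq> 0" using False f0 by (simp add: cc_def field_simps)
    have "coeff rU (N - 1) \<noteq> 0" unfolding rU_alt deg_case1(2)[OF a1nz] using a1nz Pi1_nz by simp
    then show False using z by simp
  qed
qed

end

definition ev :: "real poly \<Rightarrow> complex \<Rightarrow> complex" where "ev p z = poly (cp p) z"

lemma ev_add[simp]: "ev (p + r) z = ev p z + ev r z" by (simp add: ev_def)
lemma ev_diff[simp]: "ev (p - r) z = ev p z - ev r z" by (simp add: ev_def)
lemma ev_smult[simp]: "ev (smult c p) z = of_real c * ev p z" by (simp add: ev_def)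
lemma ev_mult[simp]: "ev (p * r) z = ev p z * ev r z" by (simp add: ev_def)
lemma ev_pCons[simp]: "ev (pCons a p) z = of_real a + z * ev p z" by (simp add: ev_def)
lemma ev_0[simp]: "ev 0 z = 0" by (simp add: ev_def)
lemma ev_uminus[simp]: "ev (- p) z = - ev p z" by (simp add: ev_def)

lemma sum4: "(\<Sum>j<(4::nat). g j) = g 0 + g 1 + g 2 + (g 3 :: complex)"
  by (simp add: eval_nat_numeral lessThan_Suc add.assoc)

context slp
begin

definition "ya z a b n = a * ev (PA 1 0 n) z + b * ev (PA 0 1 n) z"
definition "yb z a b n = a * ev (PB 1 0 n) z + b * ev (PB 0 1 n) z"
definition "solf z a b = (\<lambda>n. if n \<le> Suc N then ya z a b n else 0)"

lemma ya_0[simp]: "ya z a b 0 = a" by (simp add: ya_def ev_def)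
lemma yb_0[simp]: "yb z a b 0 = b" by (simp add: yb_def ev_def)

lemma ya_Suc: "ya z a b (Suc n) = ya z a b n + yb z a b n / of_real (f n)"
  unfolding ya_def yb_def PA_Suc[of 1 0 n] PA_Suc[of 0 1 n] by (simp add: algebra_simps divide_inverse)

lemma yb_Suc: "yb z a b (Suc n) = yb z a b n + (of_real (q (Suc n)) - z * of_real (w (Suc n))) * ya z a b (Suc n)"
  unfolding yb_def ya_def PB_Suc[of 1 0 n] PB_Suc[of 0 1 n] by (simp add: algebra_simps)

lemma ya_N: "ya z a b N = a * ev m11 z + b * ev m12 z" by (simp add: ya_def m11_def m12_def)
lemma yb_N: "yb z a b N = a * ev m21 z + b * ev m22 z" by (simp add: yb_def m21_def m22_def)

lemma fn_c: "n \<le> N \<Longrightarrow> (of_real (f n) :: complex) \<noteq> 0" using fnz by auto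

lemma solf_props:
  assumes "n \<le> N"
  shows "solf z a b n = ya z a b n" "of_real (f n) * fwd (solf z a b) n = yb z a b n"
proof -
  show "solf z a b n = ya z a b n" using assms by (simp add: solf_def)
  have "fwd (solf z a b) n = yb z a b n / of_real (f n)"
    using assms by (simp add: solf_def fwd_def ya_Suc)
  then show "of_real (f n) * fwd (solf z a b) n = yb z a b n" using fn_c[OF assms] by simp
qed

lemma sol_char:
  "y \<in> sol_space N f q w BC z \<longleftrightarrow>
   (\<exists>a b. y = solf z a b \<and> (\<forall>i<2. BC i 0 * a + BC i 1 * b + BC i 2 * ya z a b N + BC i 3 * yb z a b N = 0))"
proof
  assume y: "y \<in> sol_space N f q w BC z"
  define a where "a = y 0"
  define b where "b = of_real (f 0) * fwd y 0"
  have zero: "\<forall>n>Suc N. y n = 0" and eqn: "\<forall>n\<in>{1..N}. - (of_real (f n) * fwd y n - of_real (f (n-1)) * fwd y (n-1))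
                     + of_real (q n) * y n = z * of_real (w n) * y n"
    and bc: "\<forall>i<2. (\<Sum>j<4. BC i j * bvec f N y j) = 0" using y by (auto simp: sol_space_def)
  have ind: "n \<le> N \<longrightarrow> y n = ya z a b n \<and> of_real (f n) * fwd y n = yb z a b n" for n
  proof (induct n)
    case 0 then show ?case by (simp add: a_def b_def)
  next
    case (Suc n)
    show ?case
    proof
      assume sn: "Suc n \<le> N"
      then have IH: "y n = ya z a b n" "of_real (f n) * fwd y n = yb z a b n" using Suc by auto
      have fn: "(of_real (f n) :: complex) \<noteq> 0" using fn_c sn by auto
      have ys: "y (Suc n) = ya z a b (Suc n)"
      proof -
        have "y (Suc n) = y n + fwd y n" by (simp add: fwd_def)
        also have "fwd y n = yb z a b n / of_real (f n)" using IH(2) fn by (simp add: field_simps)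
        finally show ?thesis using IH(1) by (simp add: ya_Suc)
      qed
      have "- (of_real (f (Suc n)) * fwd y (Suc n) - of_real (f n) * fwd y n)
                     + of_real (q (Suc n)) * y (Suc n) = z * of_real (w (Suc n)) * y (Suc n)"
        using eqn sn by (metis atLeastAtMost_iff diff_Suc_1 le_add1 plus_1_eq_Suc)
      then have "of_real (f (Suc n)) * fwd y (Suc n) = yb z a b (Suc n)"
        using IH(2) ys by (simp add: yb_Suc algebra_simps)
      then show "y (Suc n) = ya z a b (Suc n) \<and> of_real (f (Suc n)) * fwd y (Suc n) = yb z a b (Suc n)"
        using ys by simp
    qed
  qed
  have yN1: "y (Suc N) = ya z a b (Suc N)"
  proof -
    have "y (Suc N) = y N + fwd y N" by (simp add: fwd_def)
    also have "fwd y N = yb z a b N / of_real (f N)" using ind[of N] fn_c[of N] by (simp add: field_simps)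
    finally show ?thesis using ind[of N] by (simp add: ya_Suc)
  qed
  have yeq: "y = solf z a b"
  proof
    fix n show "y n = solf z a b n"
    proof (cases "n \<le> N")
      case True then show ?thesis using ind[of n] by (simp add: solf_def)
    next
      case False
      then show ?thesis
      proof (cases "n = Suc N")
        case True then show ?thesis using yN1 by (simp add: solf_def)
      next
        case False
        with \<open>\<not> n \<le> N\<close> have "n > Suc N" by simp
        then show ?thesis using zero by (simp add: solf_def)
      qed
    qed
  qed
  have bv: "bvec f N y 0 = a" "bvec f N y 1 = b" "bvec f N y 2 = ya z a b N" "bvec f N y 3 = yb z a b N"
    using ind[of N] by (auto simp: bvec_def a_def b_def)
  show "\<exists>a b. y = solf z a b \<and> (\<forall>i<2. BC i 0 * a + BC i 1 * b + BC i 2 * ya z a b N + BC i 3 * yb z a b N = 0)"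
    using bc yeq bv by (intro exI[of _ a] exI[of _ b]) (auto simp: sum4)
next
  assume "\<exists>a b. y = solf z a b \<and> (\<forall>i<2. BC i 0 * a + BC i 1 * b + BC i 2 * ya z a b N + BC i 3 * yb z a b N = 0)"
  then obtain a b where y: "y = solf z a b"
    and bc: "\<forall>i<2. BC i 0 * a + BC i 1 * b + BC i 2 * ya z a b N + BC i 3 * yb z a b N = 0" by blast
  have zero: "\<forall>n>Suc N. y n = 0" by (simp add: y solf_def)
  have eqn: "\<forall>n\<in>{1..N}. - (of_real (f n) * fwd y n - of_real (f (n-1)) * fwd y (n-1))
                     + of_real (q n) * y n = z * of_real (w n) * y n"
  proof
    fix n assume n: "n \<in> {1..N}"
    then obtain m where m: "n = Suc m" by (cases n) auto
    have mN: "m \<le> N" using n m by auto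
    have "of_real (f n) * fwd y n = yb z a b n" "of_real (f (n-1)) * fwd y (n-1) = yb z a b m"
      "y n = ya z a b n" using solf_props[of n z a b] solf_props[of m z a b] n m mN by (auto simp: y)
    then show "- (of_real (f n) * fwd y n - of_real (f (n-1)) * fwd y (n-1))
                     + of_real (q n) * y n = z * of_real (w n) * y n"
      using m by (simp add: yb_Suc algebra_simps)
  qed
  have bv: "bvec f N y 0 = a" "bvec f N y 1 = b" "bvec f N y 2 = ya z a b N" "bvec f N y 3 = yb z a b N"
    using solf_props[of 0 z a b] solf_props[of N z a b] by (auto simp: bvec_def y)
  have "\<forall>i<2. (\<Sum>j<4. BC i j * bvec f N y j) = 0" using bc bv by (simp add: sum4)
  then show "y \<in> sol_space N f q w BC z" using zero eqn by (simp add: sol_space_def)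
qed

end

lemma ker_row:
  fixes A B a b :: complex
  assumes "(A, B) \<noteq> (0, 0)"
  shows "A * a + B * b = 0 \<longleftrightarrow> (\<exists>t. a = t * (- B) \<and> b = t * A)"
proof
  assume h: "A * a + B * b = 0"
  show "\<exists>t. a = t * (- B) \<and> b = t * A"
  proof (cases "A = 0")
    case True
    then have "B \<noteq> 0" using assms by auto
    then have "b = 0" using h True by simp
    then show ?thesis using True \<open>B \<noteq> 0\<close> by (intro exI[of _ "- a / B"]) auto
  next
    case False
    then show ?thesis using h by (intro exI[of _ "b / A"]) (auto simp: field_simps add_eq_0_iff)
  qed
qed (auto simp: algebra_simps)

lemma ker2:
  fixes A B C D :: complex
  assumes det: "A * D - B * C = 0" and nz: "\<not> (A = 0 \<and> B = 0 \<and> C = 0 \<and> D = 0)"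
  obtains v1 v2 where "(v1, v2) \<noteq> (0, 0)"
    "\<And>a b. (A * a + B * b = 0 \<and> C * a + D * b = 0) \<longleftrightarrow> (\<exists>t. a = t * v1 \<and> b = t * v2)"
proof (cases "(A, B) = (0, 0)")
  case False
  show ?thesis
  proof (rule that[of "- B" A])
    show "(- B, A) \<noteq> (0, 0)" using False by auto
    fix a b
    show "(A * a + B * b = 0 \<and> C * a + D * b = 0) \<longleftrightarrow> (\<exists>t. a = t * - B \<and> b = t * A)"
    proof
      assume "A * a + B * b = 0 \<and> C * a + D * b = 0"
      then show "\<exists>t. a = t * - B \<and> b = t * A" using ker_row[OF False] by blast
    next
      assume "\<exists>t. a = t * - B \<and> b = t * A"
      then obtain t where "a = t * - B" "b = t * A" by blast
      then show "A * a + B * b = 0 \<and> C * a + D * b = 0" using det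
        by (simp add: algebra_simps)
    qed
  qed
next
  case True
  then have AB: "A = 0" "B = 0" by auto
  then have CD: "(C, D) \<noteq> (0, 0)" using nz by auto
  show ?thesis
  proof (rule that[of "- D" C])
    show "(- D, C) \<noteq> (0, 0)" using CD by auto
    fix a b
    show "(A * a + B * b = 0 \<and> C * a + D * b = 0) \<longleftrightarrow> (\<exists>t. a = t * - D \<and> b = t * C)"
      using ker_row[OF CD, of a b] AB by simp
  qed
qed

lemma par_real:
  fixes A B :: complex and u v :: real
  assumes "(u, v) \<noteq> (0, 0)" "of_real u * A + of_real v * B = 0"
  shows "A * cnj B - B * cnj A = 0"
proof (cases "v = 0")
  case True
  then have "u \<noteq> 0" using assms by auto
  then have "A = 0" using assms True by simp
  then show ?thesis by simp
next
  case False
  then have B: "B = - of_real (u / v) * A" using assms(2) by (simp add: field_simps add_eq_0_iff)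
  show ?thesis unfolding B by (simp add: algebra_simps)
qed

context slp
begin

lemma twopt:
  "ya z a b n * yb m c d n - yb z a b n * ya m c d n - (a * d - b * c)
   = (z - m) * (\<Sum>k\<in>{1..n}. of_real (w k) * ya z a b k * ya m c d k)"
proof (induct n)
  case 0 then show ?case by simp
next
  case (Suc n)
  define A where "A = ya z a b (Suc n)"
  define A' where "A' = ya m c d (Suc n)"
  have yA: "A = ya z a b n + yb z a b n / of_real (f n)" by (simp add: A_def ya_Suc)
  have yA': "A' = ya m c d n + yb m c d n / of_real (f n)" by (simp add: A'_def ya_Suc)
  have e: "A * yb m c d n - yb z a b n * A' = ya z a b n * yb m c d n - yb z a b n * ya m c d n"
    unfolding yA yA' by (simp add: algebra_simps)
  have X: "ya z a b (Suc n) * yb m c d (Suc n) - yb z a b (Suc n) * ya m c d (Suc n)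
     = (A * yb m c d n - yb z a b n * A') + (z - m) * of_real (w (Suc n)) * A * A'"
    unfolding yb_Suc A_def[symmetric] A'_def[symmetric] by (simp add: algebra_simps)
  have sumS: "(\<Sum>k\<in>{1..Suc n}. of_real (w k) * ya z a b k * ya m c d k)
     = (\<Sum>k\<in>{1..n}. of_real (w k) * ya z a b k * ya m c d k) + of_real (w (Suc n)) * A * A'"
    by (simp add: sum.cl_ivl_Suc A_def A'_def)
  have "ya z a b (Suc n) * yb m c d (Suc n) - yb z a b (Suc n) * ya m c d (Suc n) - (a * d - b * c)
     = (ya z a b n * yb m c d n - yb z a b n * ya m c d n - (a * d - b * c))
       + (z - m) * of_real (w (Suc n)) * A * A'" using X e by simp
  also have "\<dots> = (z - m) * (\<Sum>k\<in>{1..n}. of_real (w k) * ya z a b k * ya m c d k)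
       + (z - m) * of_real (w (Suc n)) * A * A'" using Suc by simp
  also have "\<dots> = (z - m) * (\<Sum>k\<in>{1..Suc n}. of_real (w k) * ya z a b k * ya m c d k)"
    unfolding sumS by (simp add: algebra_simps)
  finally show ?case .
qed

lemma ya_cnj: "cnj (ya z a b n) = ya (cnj z) (cnj a) (cnj b) n"
  by (simp add: ya_def ev_def poly_cp_cnj)
lemma yb_cnj: "cnj (yb z a b n) = yb (cnj z) (cnj a) (cnj b) n"
  by (simp add: yb_def ev_def poly_cp_cnj)

lemma ya12:
  assumes "(a, b) \<noteq> (0, 0)"
  shows "ya z a b 1 \<noteq> 0 \<or> ya z a b 2 \<noteq> 0"
proof -
  have f0: "(of_real (f 0) :: complex) \<noteq> 0" and f1: "(of_real (f 1) :: complex) \<noteq> 0"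
    using fnz N2 by auto
  have a1: "ya z a b 1 = a + b / of_real (f 0)" using ya_Suc[of z a b 0] by simp
  have a2: "ya z a b 2 = ya z a b 1 + yb z a b 1 / of_real (f 1)"
    using ya_Suc[of z a b 1] by (simp add: numeral_2_eq_2)
  have b1: "yb z a b 1 = b + (of_real (q 1) - z * of_real (w 1)) * ya z a b 1"
    using yb_Suc[of z a b 0] by simp
  show ?thesis
  proof (cases "ya z a b 1 = 0")
    case True
    then have "b \<noteq> 0" using assms a1 f0 by auto
    then show ?thesis using a2 b1 True f1 by simp
  next
    case False then show ?thesis by simp
  qed
qed

lemma real_main:
  assumes ab: "(a, b) \<noteq> (0, 0)"
    and h: "ya z a b N * cnj (yb z a b N) - yb z a b N * cnj (ya z a b N) = a * cnj b - b * cnj a"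
  shows "z \<in> \<real>"
proof -
  define S where "S = (\<Sum>k\<in>{1..N}. w k * (cmod (ya z a b k))^2)"
  have tp: "(z - cnj z) * (\<Sum>k\<in>{1..N}. of_real (w k) * ya z a b k * cnj (ya z a b k)) = 0"
    using twopt[of z a b N "cnj z" "cnj a" "cnj b"] h by (simp add: ya_cnj yb_cnj)
  have "(\<Sum>k\<in>{1..N}. of_real (w k) * ya z a b k * cnj (ya z a b k)) = of_real S"
  proof -
    have t: "of_real (w k) * ya z a b k * cnj (ya z a b k) = of_real (w k * (cmod (ya z a b k))^2)" for k
      by (metis complex_norm_square mult.assoc of_real_mult)
    show ?thesis unfolding t S_def by simp
  qed
  moreover have "S > 0"
  proof -
    have nn: "\<forall>k\<in>{1..N}. 0 \<le> w k * (cmod (ya z a b k))^2"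
    proof
      fix k assume "k \<in> {1..N}"
      then have "w k > 0" using wpos by auto
      then show "0 \<le> w k * (cmod (ya z a b k))^2" by simp
    qed
    obtain k where k: "k \<in> {1..N}" "ya z a b k \<noteq> 0"
      using ya12[OF ab, of z] N2 by (metis atLeastAtMost_iff le_numeral_extra(4) one_le_numeral order.trans)
    have "0 < w k * (cmod (ya z a b k))^2" using k wpos by simp
    also have "\<dots> \<le> S" unfolding S_def by (rule member_le_sum) (use k nn in auto)
    finally show ?thesis .
  qed
  ultimately have "z - cnj z = 0" using tp by simp
  then show ?thesis by (simp add: Reals_cnj_iff)
qed

end

context slpK
begin

lemma rT_real: "ev rT z = 0 \<Longrightarrow> z \<in> \<real>"
proof -
  assume h: "ev rT z = 0"
  have ne: "(-k21, k11) \<noteq> (0, 0)" using SL by auto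
  have "of_real (-k21) * ya z 1 0 N + of_real k11 * yb z 1 0 N = 0"
    using h by (simp add: rT_def ya_N yb_N)
  from par_real[OF ne this] show ?thesis by (intro real_main[of 1 0]) auto
qed

lemma rU_real: "ev rU z = 0 \<Longrightarrow> z \<in> \<real>"
proof -
  assume h: "ev rU z = 0"
  have ne: "(complex_of_real k12, complex_of_real (- k11)) \<noteq> (0, 0)" using SL by auto
  have "ya z k12 (- k11) N = 0" using h by (simp add: rU_def ya_N)
  then show ?thesis by (intro real_main[OF ne]) simp
qed

end

interpretation cvs: vector_space "\<lambda>(c::complex) (y::nat \<Rightarrow> complex) n. c * y n"
  by unfold_locales (auto simp: fun_eq_iff algebra_simps)

lemma dim_line:
  fixes u :: "nat \<Rightarrow> complex"
  assumes "u \<noteq> 0"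
  shows "cvs.dim (range (\<lambda>t. (\<lambda>n. t * u n))) = 1"
proof -
  have "range (\<lambda>t. (\<lambda>n. t * u n)) = cvs.span {u}" by (simp add: cvs.span_singleton)
  then have "cvs.dim (range (\<lambda>t. (\<lambda>n. t * u n))) = cvs.dim {u}" by simp
  also have "\<dots> = card {u}" by (rule cvs.dim_eq_card_independent) (use assms in simp)
  finally show ?thesis by simp
qed

lemma dim_plane:
  fixes u v :: "nat \<Rightarrow> complex"
  assumes v: "v \<noteq> 0" and uv: "\<forall>k. u \<noteq> (\<lambda>n. k * v n)"
  shows "cvs.dim {y. \<exists>a b. y = (\<lambda>n. a * u n + b * v n)} = 2"
proof -
  have sp: "cvs.span {v} = range (\<lambda>k. (\<lambda>n. k * v n))" by (simp add: cvs.span_singleton)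
  have "{y. \<exists>a b. y = (\<lambda>n. a * u n + b * v n)} = cvs.span {u, v}"
  proof -
    have "cvs.span {u, v} = {x. \<exists>k. (x - (\<lambda>n. k * u n)) \<in> cvs.span {v}}" by (rule cvs.span_insert)
    also have "\<dots> = {y. \<exists>a b. y = (\<lambda>n. a * u n + b * v n)}"
      unfolding sp
    proof (rule set_eqI, rule iffI)
      fix x assume "x \<in> {x. \<exists>k. (x - (\<lambda>n. k * u n)) \<in> range (\<lambda>k. (\<lambda>n. k * v n))}"
      then obtain k c where "x - (\<lambda>n. k * u n) = (\<lambda>n. c * v n)" by auto
      then have "x = (\<lambda>n. k * u n + c * v n)" by (auto simp: fun_eq_iff algebra_simps dest: fun_cong)
      then show "x \<in> {y. \<exists>a b. y = (\<lambda>n. a * u n + b * v n)}" by blast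
    next
      fix x assume "x \<in> {y. \<exists>a b. y = (\<lambda>n. a * u n + b * v n)}"
      then obtain a b where "x = (\<lambda>n. a * u n + b * v n)" by blast
      then have "x - (\<lambda>n. a * u n) = (\<lambda>n. b * v n)" by (simp add: fun_eq_iff)
      then show "x \<in> {x. \<exists>k. (x - (\<lambda>n. k * u n)) \<in> range (\<lambda>k. (\<lambda>n. k * v n))}" by blast
    qed
    finally show ?thesis by simp
  qed
  then have "cvs.dim {y. \<exists>a b. y = (\<lambda>n. a * u n + b * v n)} = cvs.dim {u, v}" by simp
  also have "\<dots> = card {u, v}"
  proof (rule cvs.dim_eq_card_independent)
    have "u \<noteq> v" using uv[rule_format, of 1] by auto
    moreover have "u \<notin> cvs.span {v}" using uv unfolding sp by auto
    ultimately show "cvs.independent {u, v}" using v by (simp add: cvs.independent_insert)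
  qed
  also have "\<dots> = 2" using uv[rule_format, of 1] by auto
  finally show ?thesis .
qed


lemma all2: "(\<forall>i<(2::nat). P i) \<longleftrightarrow> P 0 \<and> P 1"
  by (auto simp: less_2_cases_iff)

context slp
begin

lemma solf_lin: "solf z a b = (\<lambda>n. a * solf z 1 0 n + b * solf z 0 1 n)"
  by (auto simp: solf_def ya_def fun_eq_iff)

lemma solf_scale: "solf z (t * a) (t * b) = (\<lambda>n. t * solf z a b n)"
  by (auto simp: solf_def ya_def fun_eq_iff algebra_simps)

lemma solf_nz: assumes "(a, b) \<noteq> (0, 0)" shows "solf z a b \<noteq> 0"
proof
  assume z: "solf z a b = 0"
  have "solf z a b 0 = a" by (simp add: solf_def)
  then have a: "a = 0" using z by simp
  have "solf z a b 1 = a + b / of_real (f 0)" by (simp add: solf_def ya_Suc[of z a b 0])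
  then have "b = 0" using z a fnz by auto
  with a assms show False by simp
qed

lemma solf_00: "solf z 0 0 = 0" by (simp add: solf_def ya_def fun_eq_iff)

lemma is_eig_iff: "is_eig N f q w BC z \<longleftrightarrow>
   (\<exists>a b. (a, b) \<noteq> (0, 0) \<and> (\<forall>i<2. BC i 0 * a + BC i 1 * b + BC i 2 * ya z a b N + BC i 3 * yb z a b N = 0))"
proof
  assume "is_eig N f q w BC z"
  then obtain y where y: "y \<in> sol_space N f q w BC z" "y \<noteq> 0" by (auto simp: is_eig_def)
  then obtain a b where ab: "y = solf z a b"
    "\<forall>i<2. BC i 0 * a + BC i 1 * b + BC i 2 * ya z a b N + BC i 3 * yb z a b N = 0"
    using sol_char by blast
  have "(a, b) \<noteq> (0, 0)" using y(2) ab(1) solf_00 by auto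
  then show "\<exists>a b. (a, b) \<noteq> (0, 0) \<and> (\<forall>i<2. BC i 0 * a + BC i 1 * b + BC i 2 * ya z a b N + BC i 3 * yb z a b N = 0)"
    using ab by blast
next
  assume "\<exists>a b. (a, b) \<noteq> (0, 0) \<and> (\<forall>i<2. BC i 0 * a + BC i 1 * b + BC i 2 * ya z a b N + BC i 3 * yb z a b N = 0)"
  then obtain a b where ab: "(a, b) \<noteq> (0, 0)"
    "\<forall>i<2. BC i 0 * a + BC i 1 * b + BC i 2 * ya z a b N + BC i 3 * yb z a b N = 0" by blast
  have "solf z a b \<in> sol_space N f q w BC z" using sol_char ab(2) by blast
  then show "is_eig N f q w BC z" using solf_nz[OF ab(1)] by (auto simp: is_eig_def)
qed

lemma line_dim:
  assumes "sol_space N f q w BC z = {y. \<exists>t. y = solf z (t * a) (t * b)}" "(a, b) \<noteq> (0, 0)"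
  shows "eig_mult N f q w BC z = 1"
proof -
  have "sol_space N f q w BC z = range (\<lambda>t. (\<lambda>n. t * solf z a b n))"
    using assms(1) by (auto simp: solf_scale)
  then show ?thesis unfolding eig_mult_def using dim_line[OF solf_nz[OF assms(2)]] by simp
qed

lemma plane_dim:
  assumes "sol_space N f q w BC z = {y. \<exists>a b. y = solf z a b}"
  shows "eig_mult N f q w BC z = 2"
proof -
  have e: "sol_space N f q w BC z = {y. \<exists>a b. y = (\<lambda>n. a * solf z 1 0 n + b * solf z 0 1 n)}"
    using assms by (subst (asm) solf_lin) simp
  have v: "solf z 0 1 \<noteq> 0" using solf_nz[of 0 1] by simp
  have uv: "\<forall>k. solf z 1 0 \<noteq> (\<lambda>n. k * solf z 0 1 n)"
  proof
    fix k show "solf z 1 0 \<noteq> (\<lambda>n. k * solf z 0 1 n)"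
    proof
      assume "solf z 1 0 = (\<lambda>n. k * solf z 0 1 n)"
      then have "solf z 1 0 0 = k * solf z 0 1 0" by metis
      then show False by (simp add: solf_def)
    qed
  qed
  show ?thesis unfolding eig_mult_def e using dim_plane[OF v uv] by simp
qed

end

context slpK
begin

lemma T_cond: "(\<forall>i<2. BC_T k11 k12 k21 k22 i 0 * a + BC_T k11 k12 k21 k22 i 1 * b
     + BC_T k11 k12 k21 k22 i 2 * ya z a b N + BC_T k11 k12 k21 k22 i 3 * yb z a b N = 0)
   \<longleftrightarrow> b = 0 \<and> a * ev rT z = 0"
  by (auto simp: all2 BC_T_def ya_N yb_N rT_def algebra_simps)

lemma T_eig: "is_eig N f q w (BC_T k11 k12 k21 k22) z \<longleftrightarrow> ev rT z = 0"
  unfolding is_eig_iff T_cond by auto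

lemma T_mult: assumes "ev rT z = 0" shows "eig_mult N f q w (BC_T k11 k12 k21 k22) z = 1"
proof (rule line_dim[of _ _ 1 0])
  show "sol_space N f q w (BC_T k11 k12 k21 k22) z = {y. \<exists>t. y = solf z (t * 1) (t * 0)}"
    apply (rule set_eqI)
    apply (simp only: mem_Collect_eq sol_char T_cond)
    using assms by auto
qed simp

lemma U_cond: "(\<forall>i<2. BC_U k11 k12 k21 k22 i 0 * a + BC_U k11 k12 k21 k22 i 1 * b
     + BC_U k11 k12 k21 k22 i 2 * ya z a b N + BC_U k11 k12 k21 k22 i 3 * yb z a b N = 0)
   \<longleftrightarrow> (\<exists>t. a = t * (- of_real k12) \<and> b = t * of_real k11 \<and> t * ev rU z = 0)"
proof -
  have ne: "(complex_of_real k11, complex_of_real k12) \<noteq> (0, 0)" using SL by auto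
  have l: "(\<forall>i<2. BC_U k11 k12 k21 k22 i 0 * a + BC_U k11 k12 k21 k22 i 1 * b
     + BC_U k11 k12 k21 k22 i 2 * ya z a b N + BC_U k11 k12 k21 k22 i 3 * yb z a b N = 0)
     \<longleftrightarrow> (of_real k11 * a + of_real k12 * b = 0 \<and> ya z a b N = 0)"
    by (simp add: all2 BC_U_def)
  have yaU: "ya z (t * - of_real k12) (t * of_real k11) N = - (t * ev rU z)" for t
    by (simp add: ya_N rU_def algebra_simps)
  show ?thesis unfolding l ker_row[OF ne]
  proof
    assume "(\<exists>t. a = t * - complex_of_real k12 \<and> b = t * complex_of_real k11) \<and> ya z a b N = 0"
    then obtain t where "a = t * - complex_of_real k12" "b = t * complex_of_real k11" "ya z a b N = 0" by blast
    then show "\<exists>t. a = t * - complex_of_real k12 \<and> b = t * complex_of_real k11 \<and> t * ev rU z = 0"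
      using yaU[of t] by auto
  next
    assume "\<exists>t. a = t * - complex_of_real k12 \<and> b = t * complex_of_real k11 \<and> t * ev rU z = 0"
    then obtain t where "a = t * - complex_of_real k12" "b = t * complex_of_real k11" "t * ev rU z = 0" by blast
    then show "(\<exists>t. a = t * - complex_of_real k12 \<and> b = t * complex_of_real k11) \<and> ya z a b N = 0"
      using yaU[of t] by auto
  qed
qed

lemma U_eig: "is_eig N f q w (BC_U k11 k12 k21 k22) z \<longleftrightarrow> ev rU z = 0"
proof -
  have ne: "(complex_of_real k11, complex_of_real k12) \<noteq> (0, 0)" using SL by auto
  show ?thesis unfolding is_eig_iff U_cond
  proof
    assume "\<exists>a b. (a, b) \<noteq> (0, 0) \<and> (\<exists>t. a = t * - complex_of_real k12 \<and> b = t * complex_of_real k11 \<and> t * ev rU z = 0)"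
    then obtain a b t where h: "(a, b) \<noteq> (0, 0)" "a = t * - complex_of_real k12"
      "b = t * complex_of_real k11" "t * ev rU z = 0" by blast
    have "t \<noteq> 0" using h(1,2,3) by auto
    then show "ev rU z = 0" using h(4) by simp
  next
    assume "ev rU z = 0"
    then show "\<exists>a b. (a, b) \<noteq> (0, 0) \<and> (\<exists>t. a = t * - complex_of_real k12 \<and> b = t * complex_of_real k11 \<and> t * ev rU z = 0)"
      using ne by (intro exI[of _ "- of_real k12"] exI[of _ "of_real k11"]) auto
  qed
qed

lemma U_mult: assumes "ev rU z = 0" shows "eig_mult N f q w (BC_U k11 k12 k21 k22) z = 1"
proof (rule line_dim[of _ _ "- of_real k12" "of_real k11"])
  show "sol_space N f q w (BC_U k11 k12 k21 k22) z = {y. \<exists>t. y = solf z (t * - of_real k12) (t * of_real k11)}"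
    apply (rule set_eqI)
    apply (simp only: mem_Collect_eq sol_char U_cond)
    using assms by auto
  show "(- complex_of_real k12, complex_of_real k11) \<noteq> (0, 0)" using SL by auto
qed

end

context rotm
begin
lemma ordD:
  assumes Dc: "poly D c = 0"
  shows "order c D = (if poly r c = 0 \<and> poly q c = 0 then 2 else 1)"
proof (cases "poly r c = 0")
  case False
  have "\<bar>poly p c + poly s c\<bar> \<le> 2" using Dc c0 by (simp add: D_def)
  then have "poly r c * poly (pderiv D) c > 0" using K2[OF False] by simp
  then have "poly (pderiv D) c \<noteq> 0" by auto
  then show ?thesis using order1I[OF Dc] False by simp
next
  case True
  show ?thesis
  proof (cases "poly q c = 0")
    case False
    have "poly (pderiv D) c \<noteq> 0" using K4(1)[OF True Dc] False g11pos[of c] by simp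
    then show ?thesis using order1I[OF Dc] False by simp
  next
    case qc: True
    have D'0: "poly (pderiv D) c = 0" using K4(1)[OF True Dc] qc by simp
    have "poly (pderiv (pderiv D)) c \<noteq> 0" using K4(2)[OF True Dc qc] by auto
    then show ?thesis using order2I[OF Dc D'0] True qc by simp
  qed
qed
end

lemma det_of_ker:
  fixes A B C D a b :: complex
  assumes "A * a + B * b = 0" "C * a + D * b = 0" "(a, b) \<noteq> (0, 0)"
  shows "A * D - B * C = 0"
proof -
  have "a * (A * D - B * C) = D * (A * a + B * b) - B * (C * a + D * b)" by (simp add: algebra_simps)
  moreover have "b * (A * D - B * C) = A * (C * a + D * b) - C * (A * a + B * b)" by (simp add: algebra_simps)
  ultimately show ?thesis using assms by auto
qed

context slpK
begin

definition "zt = cis \<gamma>"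

lemma zt_nz: "zt \<noteq> 0" by (simp add: zt_def)
lemma zt_cnj: "zt * cnj zt = 1" by (simp add: zt_def cis_cnj cis_mult)
lemma zt2: "zt * zt + 1 = zt * of_real c0"
  by (simp add: zt_def c0_def complex_eq_iff cis.sel power2_eq_square algebra_simps)

lemma mK: "m11 = smult k11 pT + smult k12 rT" "m12 = smult k11 qT + smult k12 sT"
          "m21 = smult k21 pT + smult k22 rT" "m22 = smult k21 qT + smult k22 sT"
proof -
  have "smult k11 pT + smult k12 rT = smult (k11 * k22 - k12 * k21) m11"
    unfolding pT_def rT_def by (intro poly_ext) (simp add: algebra_simps)
  then show "m11 = smult k11 pT + smult k12 rT" using SL by simp
  have "smult k11 qT + smult k12 sT = smult (k11 * k22 - k12 * k21) m12"
    unfolding qT_def sT_def by (intro poly_ext) (simp add: algebra_simps)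
  then show "m12 = smult k11 qT + smult k12 sT" using SL by simp
  have "smult k21 pT + smult k22 rT = smult (k11 * k22 - k12 * k21) m21"
    unfolding pT_def rT_def by (intro poly_ext) (simp add: algebra_simps)
  then show "m21 = smult k21 pT + smult k22 rT" using SL by simp
  have "smult k21 qT + smult k22 sT = smult (k11 * k22 - k12 * k21) m22"
    unfolding qT_def sT_def by (intro poly_ext) (simp add: algebra_simps)
  then show "m22 = smult k21 qT + smult k22 sT" using SL by simp
qed

interpretation RT: rotm pT qT rT sT c0
  using rotT[OF SL c0_le] by (simp add: pT_def qT_def rT_def sT_def)

lemma RT_D: "RT.D = DD" by (simp add: RT.D_def DD_def)

lemma detP_ev: "ev pT z * ev sT z - ev qT z * ev rT z = 1"
proof -
  have "ev (pT * sT - qT * rT) z = ev 1 z" using RT.det by simp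
  moreover have "cp 1 = 1" by (simp add: cp_def)
  ultimately show ?thesis by (simp add: ev_def)
qed

lemma detE: "(ev pT z - zt) * (ev sT z - zt) - ev qT z * ev rT z = - zt * ev DD z"
proof -
  have "(ev pT z - zt) * (ev sT z - zt) - ev qT z * ev rT z
     = (ev pT z * ev sT z - ev qT z * ev rT z) - zt * (ev pT z + ev sT z) + zt * zt"
    by (simp add: algebra_simps)
  also have "\<dots> = (zt * zt + 1) - zt * (ev pT z + ev sT z)" using detP_ev[of z] by simp
  also have "\<dots> = - zt * ev DD z" unfolding zt2 by (simp add: DD_def algebra_simps ev_def)
  finally show ?thesis .
qed

lemma E_cond: "(\<forall>i<2. BC_K \<gamma> k11 k12 k21 k22 i 0 * a + BC_K \<gamma> k11 k12 k21 k22 i 1 * b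
     + BC_K \<gamma> k11 k12 k21 k22 i 2 * ya z a b N + BC_K \<gamma> k11 k12 k21 k22 i 3 * yb z a b N = 0)
   \<longleftrightarrow> ((ev pT z - zt) * a + ev qT z * b = 0 \<and> ev rT z * a + (ev sT z - zt) * b = 0)"
proof -
  define X where "X = ev pT z * a + ev qT z * b"
  define Y where "Y = ev rT z * a + ev sT z * b"
  define u where "u = zt * a - X"
  define v where "v = zt * b - Y"
  have ya: "ya z a b N = of_real k11 * X + of_real k12 * Y"
    by (simp add: ya_N mK X_def Y_def algebra_simps)
  have yb: "yb z a b N = of_real k21 * X + of_real k22 * Y"
    by (simp add: yb_N mK X_def Y_def algebra_simps)
  have l: "(\<forall>i<2. BC_K \<gamma> k11 k12 k21 k22 i 0 * a + BC_K \<gamma> k11 k12 k21 k22 i 1 * b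
     + BC_K \<gamma> k11 k12 k21 k22 i 2 * ya z a b N + BC_K \<gamma> k11 k12 k21 k22 i 3 * yb z a b N = 0)
     \<longleftrightarrow> (of_real k11 * u + of_real k12 * v = 0 \<and> of_real k21 * u + of_real k22 * v = 0)"
    by (simp add: all2 BC_K_def ya yb u_def v_def zt_def algebra_simps)
  have SLc: "of_real k11 * of_real k22 - of_real k12 * of_real k21 = (1::complex)"
    using SL by (metis of_real_1 of_real_diff of_real_mult)
  have kk: "(of_real k11 * u + of_real k12 * v = 0 \<and> of_real k21 * u + of_real k22 * v = 0) \<longleftrightarrow> u = 0 \<and> v = 0"
  proof
    assume h: "of_real k11 * u + of_real k12 * v = 0 \<and> of_real k21 * u + of_real k22 * v = 0"
    have "u = (of_real k11 * of_real k22 - of_real k12 * of_real k21) * u" using SLc by simp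
    also have "\<dots> = of_real k22 * (of_real k11 * u + of_real k12 * v) - of_real k12 * (of_real k21 * u + of_real k22 * v)"
      by (simp add: algebra_simps)
    finally have "u = 0" using h by simp
    have "v = (of_real k11 * of_real k22 - of_real k12 * of_real k21) * v" using SLc by simp
    also have "\<dots> = of_real k11 * (of_real k21 * u + of_real k22 * v) - of_real k21 * (of_real k11 * u + of_real k12 * v)"
      by (simp add: algebra_simps)
    finally have "v = 0" using h by simp
    with \<open>u = 0\<close> show "u = 0 \<and> v = 0" by simp
  qed simp
  show ?thesis unfolding l kk by (auto simp: u_def v_def X_def Y_def algebra_simps)
qed


lemma E_ker: "ev DD z = 0 \<Longrightarrow> \<exists>a b. (a, b) \<noteq> (0, 0) \<and>
   (ev pT z - zt) * a + ev qT z * b = 0 \<and> ev rT z * a + (ev sT z - zt) * b = 0"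
proof -
  assume h: "ev DD z = 0"
  have det: "(ev pT z - zt) * (ev sT z - zt) - ev qT z * ev rT z = 0" using detE[of z] h by simp
  show ?thesis
  proof (cases "ev pT z - zt = 0 \<and> ev qT z = 0 \<and> ev rT z = 0 \<and> ev sT z - zt = 0")
    case True
    then have e: "ev pT z - zt = 0" "ev qT z = 0" "ev rT z = 0" "ev sT z - zt = 0" by blast+
    have "(1::complex, 0::complex) \<noteq> (0, 0)" by simp
    moreover have "(ev pT z - zt) * 1 + ev qT z * 0 = 0 \<and> ev rT z * 1 + (ev sT z - zt) * 0 = 0"
      by (simp only: e mult_zero_left mult_zero_right add_0)
    ultimately show ?thesis by blast
  next
    case False
    obtain v1 v2 where v: "(v1, v2) \<noteq> (0, 0)"
      "\<And>a b. ((ev pT z - zt) * a + ev qT z * b = 0 \<and> ev rT z * a + (ev sT z - zt) * b = 0) \<longleftrightarrow> (\<exists>t. a = t * v1 \<and> b = t * v2)"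
      using ker2[OF det False] by blast
    have "\<exists>t. v1 = t * v1 \<and> v2 = t * v2" by (rule exI[of _ 1]) simp
    then have "(ev pT z - zt) * v1 + ev qT z * v2 = 0 \<and> ev rT z * v1 + (ev sT z - zt) * v2 = 0"
      using v(2) by blast
    then show ?thesis using v(1) by blast
  qed
qed

lemma E_eig: "is_eig N f q w (BC_K \<gamma> k11 k12 k21 k22) z \<longleftrightarrow> ev DD z = 0"
proof
  assume "is_eig N f q w (BC_K \<gamma> k11 k12 k21 k22) z"
  then obtain a b where ab: "(a, b) \<noteq> (0, 0)" "(ev pT z - zt) * a + ev qT z * b = 0" "ev rT z * a + (ev sT z - zt) * b = 0"
    unfolding is_eig_iff E_cond by blast
  have "(ev pT z - zt) * (ev sT z - zt) - ev qT z * ev rT z = 0" by (rule det_of_ker[OF ab(2,3,1)])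
  then show "ev DD z = 0" using detE[of z] zt_nz by simp
next
  assume "ev DD z = 0"
  then show "is_eig N f q w (BC_K \<gamma> k11 k12 k21 k22) z" unfolding is_eig_iff E_cond using E_ker by blast
qed

lemma E_mult:
  assumes h: "ev DD z = 0"
  shows "eig_mult N f q w (BC_K \<gamma> k11 k12 k21 k22) z =
    (if ev pT z = zt \<and> ev sT z = zt \<and> ev qT z = 0 \<and> ev rT z = 0 then 2 else 1)"
proof (cases "ev pT z = zt \<and> ev sT z = zt \<and> ev qT z = 0 \<and> ev rT z = 0")
  case True
  then have e: "ev pT z - zt = 0" "ev qT z = 0" "ev rT z = 0" "ev sT z - zt = 0" by auto
  have "sol_space N f q w (BC_K \<gamma> k11 k12 k21 k22) z = {y. \<exists>a b. y = solf z a b}"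
    apply (rule set_eqI)
    apply (simp only: mem_Collect_eq sol_char E_cond e mult_zero_left mult_zero_right add_0 simp_thms)
    done
  then show ?thesis using plane_dim True by simp
next
  case False
  have det: "(ev pT z - zt) * (ev sT z - zt) - ev qT z * ev rT z = 0" using detE[of z] h by simp
  have F: "\<not> (ev pT z - zt = 0 \<and> ev qT z = 0 \<and> ev rT z = 0 \<and> ev sT z - zt = 0)" using False by auto
  obtain v1 v2 where v: "(v1, v2) \<noteq> (0, 0)"
      "\<And>a b. ((ev pT z - zt) * a + ev qT z * b = 0 \<and> ev rT z * a + (ev sT z - zt) * b = 0) \<longleftrightarrow> (\<exists>t. a = t * v1 \<and> b = t * v2)"
      using ker2[OF det F] by blast
  have "sol_space N f q w (BC_K \<gamma> k11 k12 k21 k22) z = {y. \<exists>t. y = solf z (t * v1) (t * v2)}"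
    apply (rule set_eqI)
    apply (simp only: mem_Collect_eq sol_char E_cond v(2))
    by auto
  then show ?thesis using line_dim[OF _ v(1)] False by simp
qed

lemma DD_real: "ev DD z = 0 \<Longrightarrow> z \<in> \<real>"
proof -
  assume h: "ev DD z = 0"
  obtain a b where ab: "(a, b) \<noteq> (0, 0)" "(ev pT z - zt) * a + ev qT z * b = 0" "ev rT z * a + (ev sT z - zt) * b = 0"
    using E_ker[OF h] by blast
  have c: "\<forall>i<2. BC_K \<gamma> k11 k12 k21 k22 i 0 * a + BC_K \<gamma> k11 k12 k21 k22 i 1 * b
     + BC_K \<gamma> k11 k12 k21 k22 i 2 * ya z a b N + BC_K \<gamma> k11 k12 k21 k22 i 3 * yb z a b N = 0"
    using ab E_cond by blast
  have ya: "ya z a b N = zt * (of_real k11 * a + of_real k12 * b)"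
    and yb: "yb z a b N = zt * (of_real k21 * a + of_real k22 * b)"
    using c by (auto simp: all2 BC_K_def zt_def algebra_simps)
  have SLc: "of_real k11 * of_real k22 - of_real k12 * of_real k21 = (1::complex)"
    using SL by (metis of_real_1 of_real_diff of_real_mult)
  have "ya z a b N * cnj (yb z a b N) - yb z a b N * cnj (ya z a b N)
     = (zt * cnj zt) * (of_real k11 * of_real k22 - of_real k12 * of_real k21) * (a * cnj b - b * cnj a)"
    unfolding ya yb by (simp add: algebra_simps)
  also have "\<dots> = a * cnj b - b * cnj a" using zt_cnj SLc by simp
  finally show ?thesis by (rule real_main[OF ab(1)])
qed

interpretation RU: rotm pU qU rU sU c0
  using rotU[OF SL c0_le] by (simp add: pU_def qU_def rU_def sU_def)

lemma cp_DD_real: "\<forall>z. poly (cp DD) z = 0 \<longrightarrow> z \<in> \<real>" using DD_real by (simp add: ev_def)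

interpretation RT2: rotm2 pT qT rT sT c0
  by unfold_locales (use DD_nz rT_nz DD_real rT_real in \<open>auto simp: DD_def[symmetric] ev_def\<close>)

interpretation RU2: rotm2 pU qU rU sU c0
  by unfold_locales (use DD_nz rU_nz DD_real rU_real in \<open>auto simp: DU ev_def\<close>)

lemma RU_D: "RU.D = DD" by (simp add: RU.D_def DU)

lemma E_mult_real:
  assumes h: "poly DD x = 0"
  shows "eig_mult N f q w (BC_K \<gamma> k11 k12 k21 k22) (of_real x) = order x DD"
proof -
  have hc: "ev DD (of_real x) = 0" using h by (simp add: ev_def)
  have o: "order x DD = (if poly rT x = 0 \<and> poly qT x = 0 then 2 else 1)"
    using RT.ordD[of x] h by (simp add: RT_D)
  have "(ev pT (of_real x) = zt \<and> ev sT (of_real x) = zt \<and> ev qT (of_real x) = 0 \<and> ev rT (of_real x) = 0)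
     \<longleftrightarrow> (poly rT x = 0 \<and> poly qT x = 0)"
  proof
    assume "ev pT (of_real x) = zt \<and> ev sT (of_real x) = zt \<and> ev qT (of_real x) = 0 \<and> ev rT (of_real x) = 0"
    then show "poly rT x = 0 \<and> poly qT x = 0" by (simp add: ev_def)
  next
    assume rq: "poly rT x = 0 \<and> poly qT x = 0"
    have Dx: "poly RT.D x = 0" using h RT_D by simp
    have ps: "poly pT x = poly sT x" "(poly pT x)^2 = 1" using RT.K3(2)[OF conjunct1[OF rq] Dx] by auto
    have tr: "poly pT x + poly sT x = c0" using h by (simp add: DD_def)
    have pc: "poly pT x = cos \<gamma>" using ps(1) tr by (simp add: c0_def)
    have "(cos \<gamma>)^2 = 1" using ps(2) pc by simp
    then have "(sin \<gamma>)^2 = 0" using sin_cos_squared_add[of \<gamma>] by simp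
    then have "sin \<gamma> = 0" by simp
    then have zc: "zt = of_real (cos \<gamma>)" by (simp add: zt_def complex_eq_iff)
    show "ev pT (of_real x) = zt \<and> ev sT (of_real x) = zt \<and> ev qT (of_real x) = 0 \<and> ev rT (of_real x) = 0"
      using rq pc ps(1) zc by (simp add: ev_def)
  qed
  then show ?thesis using E_mult[OF hc] o by simp
qed

lemma T_mult_real:
  assumes h: "poly rT x = 0"
  shows "eig_mult N f q w (BC_T k11 k12 k21 k22) (of_real x) = order x rT"
proof -
  have "poly (pderiv rT) x \<noteq> 0" using RT.K3(3)[OF h] by auto
  then have "order x rT = 1" by (rule order1I[OF h])
  moreover have "ev rT (of_real x) = 0" using h by (simp add: ev_def)
  ultimately show ?thesis using T_mult by simp
qed

lemma U_mult_real:
  assumes h: "poly rU x = 0"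
  shows "eig_mult N f q w (BC_U k11 k12 k21 k22) (of_real x) = order x rU"
proof -
  have "poly (pderiv rU) x \<noteq> 0" using RU.K3(3)[OF h] by auto
  then have "order x rU = 1" by (rule order1I[OF h])
  moreover have "ev rU (of_real x) = 0" using h by (simp add: ev_def)
  ultimately show ?thesis using U_mult by simp
qed

end

lemma filter_rep: "filter_mset P (replicate_mset n x) = (if P x then replicate_mset n x else {#})"
  by (induct n) auto

lemma size_filter_sum_rep:
  fixes g :: "real \<Rightarrow> nat"
  assumes "finite A"
  shows "size (filter_mset P (\<Sum>x\<in>A. replicate_mset (g x) x)) = (\<Sum>x\<in>{x\<in>A. P x}. g x)"
  using assms
proof (induct A rule: finite_induct)
  case empty then show ?case by simp
next
  case (insert a A)
  have "{x \<in> insert a A. P x} = (if P a then insert a {x\<in>A. P x} else {x\<in>A. P x})" by auto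
  then show ?case using insert by (simp add: filter_rep)
qed

lemma sorted_nth_le_iff:
  fixes xs :: "real list"
  assumes "sorted xs"
  shows "n < length (filter (\<lambda>x. x \<le> t) xs) \<longleftrightarrow> n < length xs \<and> xs ! n \<le> t"
proof
  assume h: "n < length (filter (\<lambda>x. x \<le> t) xs)"
  have len: "n < length xs" using h length_filter_le[of "\<lambda>x. x \<le> t" xs] by linarith
  show "n < length xs \<and> xs ! n \<le> t"
  proof (rule ccontr)
    assume "\<not> (n < length xs \<and> xs ! n \<le> t)"
    then have gt: "xs ! n > t" using len by auto
    have "{i. i < length xs \<and> xs ! i \<le> t} \<subseteq> {..<n}"
    proof
      fix i assume i: "i \<in> {i. i < length xs \<and> xs ! i \<le> t}"
      show "i \<in> {..<n}"
      proof (rule ccontr)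
        assume "i \<notin> {..<n}"
        then have "n \<le> i" by simp
        then have "xs ! n \<le> xs ! i" using assms i by (simp add: sorted_iff_nth_mono)
        then show False using i gt by simp
      qed
    qed
    then have "card {i. i < length xs \<and> xs ! i \<le> t} \<le> n" using card_mono[of "{..<n}"] by fastforce
    then show False using h by (simp add: length_filter_conv_card)
  qed
next
  assume h: "n < length xs \<and> xs ! n \<le> t"
  have "{..n} \<subseteq> {i. i < length xs \<and> xs ! i \<le> t}"
  proof
    fix i assume "i \<in> {..n}"
    then have "i \<le> n" by simp
    then have "xs ! i \<le> xs ! n" using assms h by (simp add: sorted_iff_nth_mono)
    then show "i \<in> {i. i < length xs \<and> xs ! i \<le> t}" using h \<open>i \<le> n\<close> by simp
  qed
  then have "card {..n} \<le> card {i. i < length xs \<and> xs ! i \<le> t}" by (intro card_mono) auto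
  then show "n < length (filter (\<lambda>x. x \<le> t) xs)" by (simp add: length_filter_conv_card)
qed

lemma interl:
  fixes A B :: "real multiset"
  assumes c: "\<forall>t. size (filter_mset (\<lambda>x. x \<le> t) A) \<le> size (filter_mset (\<lambda>x. x \<le> t) B) + j"
    and n: "n + j < size A"
  shows "sorted_list_of_multiset B ! n \<le> sorted_list_of_multiset A ! (n + j)"
proof -
  define xs where "xs = sorted_list_of_multiset A"
  define ys where "ys = sorted_list_of_multiset B"
  have sx: "sorted xs" "mset xs = A" and sy: "sorted ys" "mset ys = B" by (simp_all add: xs_def ys_def)
  define t where "t = xs ! (n + j)"
  have cA: "size (filter_mset (\<lambda>x. x \<le> t) A) = length (filter (\<lambda>x. x \<le> t) xs)"
    using sx by (metis mset_filter size_mset)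
  have cB: "size (filter_mset (\<lambda>x. x \<le> t) B) = length (filter (\<lambda>x. x \<le> t) ys)"
    using sy by (metis mset_filter size_mset)
  have lx: "length xs = size A" using sx by (metis size_mset)
  have "n + j < length (filter (\<lambda>x. x \<le> t) xs)"
    using sorted_nth_le_iff[OF sx(1)] n lx by (simp add: t_def)
  then have "n < length (filter (\<lambda>x. x \<le> t) ys)" using c[rule_format, of t] cA cB by simp
  then have "ys ! n \<le> t" using sorted_nth_le_iff[OF sy(1)] by simp
  then show ?thesis by (simp add: ys_def xs_def t_def)
qed

context slp
begin

lemma gen_count:
  fixes R :: "real poly"
  assumes Rnz: "R \<noteq> 0" and eig: "\<And>z. is_eig N f q w BC z \<longleftrightarrow> poly (cp R) z = 0"
    and mult: "\<And>x. poly R x = 0 \<Longrightarrow> eig_mult N f q w BC (of_real x) = order x R"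
    and real: "\<And>z. poly (cp R) z = 0 \<Longrightarrow> z \<in> \<real>"
  shows "num_eigs_eq N f q w BC (degree R)"
    "mset (eig_list N f q w BC) = (\<Sum>x\<in>{x. poly R x = 0}. replicate_mset (order x R) x)"
proof -
  have fin: "finite {x. poly R x = 0}" by (rule poly_roots_finite[OF Rnz])
  have es: "eig_set N f q w BC = of_real ` {x. poly R x = 0}"
  proof safe
    fix z assume "z \<in> eig_set N f q w BC"
    then have "poly (cp R) z = 0" using eig by (simp add: eig_set_def)
    moreover from this have "z \<in> \<real>" by (rule real)
    ultimately show "z \<in> of_real ` {x. poly R x = 0}" by (auto elim!: Reals_cases)
  next
    fix x assume "poly R x = 0"
    then show "complex_of_real x \<in> eig_set N f q w BC" using eig by (simp add: eig_set_def)
  qed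
  have "(\<Sum>lam\<in>eig_set N f q w BC. eig_mult N f q w BC lam) = (\<Sum>x\<in>{x. poly R x = 0}. order x R)"
    unfolding es by (subst sum.reindex) (auto simp: inj_on_def mult)
  also have "\<dots> = degree R" by (rule realcnt[OF Rnz]) (use real in auto)
  finally show "num_eigs_eq N f q w BC (degree R)" unfolding num_eigs_eq_def es using fin by simp
  have rs: "{x::real. is_eig N f q w BC (of_real x)} = {x. poly R x = 0}" using eig by simp
  show "mset (eig_list N f q w BC) = (\<Sum>x\<in>{x. poly R x = 0}. replicate_mset (order x R) x)"
    unfolding eig_list_def rs by (simp add: mult)
qed

end

lemma sgn_eq_iff_mult_pos: "(a::real) \<noteq> 0 \<Longrightarrow> b \<noteq> 0 \<Longrightarrow> sgn a = sgn b \<longleftrightarrow> a * b > 0"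
  by (auto simp: sgn_if zero_less_mult_iff)

context slp
begin

lemma gen_cnt:
  fixes R :: "real poly"
  assumes Rnz: "R \<noteq> 0" and eig: "\<And>z. is_eig N f q w BC z \<longleftrightarrow> poly (cp R) z = 0"
    and mult: "\<And>x. poly R x = 0 \<Longrightarrow> eig_mult N f q w BC (of_real x) = order x R"
    and real: "\<And>z. poly (cp R) z = 0 \<Longrightarrow> z \<in> \<real>"
  shows "\<forall>t. size (filter_mset (\<lambda>x. x \<le> t) (mset (eig_list N f q w BC))) = cntp R t"
    "size (mset (eig_list N f q w BC)) = degree R"
proof -
  have fin: "finite {x. poly R x = 0}" by (rule poly_roots_finite[OF Rnz])
  note m = gen_count(2)[OF Rnz eig mult real]
  show "\<forall>t. size (filter_mset (\<lambda>x. x \<le> t) (mset (eig_list N f q w BC))) = cntp R t"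
  proof
    fix t
    have "{x \<in> {x. poly R x = 0}. x \<le> t} = {x. poly R x = 0 \<and> x \<le> t}" by auto
    then show "size (filter_mset (\<lambda>x. x \<le> t) (mset (eig_list N f q w BC))) = cntp R t"
      by (simp only: m size_filter_sum_rep[OF fin] cntp_def)
  qed
  have "size (mset (eig_list N f q w BC)) = (\<Sum>x\<in>{x. poly R x = 0}. order x R)"
    by (simp only: m size_multiset_sum size_replicate_mset)
  also have "\<dots> = degree R" by (rule realcnt[OF Rnz]) (use real in auto)
  finally show "size (mset (eig_list N f q w BC)) = degree R" .
qed

lemma sl_eig: "sorted_list_of_multiset (mset (eig_list N f q w BC)) = eig_list N f q w BC"
  by (simp add: eig_list_def)

lemma interlace01:
  assumes c: "\<forall>t. int (cntp R1 t) - int (cntp R2 t) \<in> {0, 1}"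
   and h1: "\<forall>t. size (filter_mset (\<lambda>x. x \<le> t) (mset (eig_list N f q w B1))) = cntp R1 t"
           "size (mset (eig_list N f q w B1)) = degree R1"
   and h2: "\<forall>t. size (filter_mset (\<lambda>x. x \<le> t) (mset (eig_list N f q w B2))) = cntp R2 t"
           "size (mset (eig_list N f q w B2)) = degree R2"
  shows "n < degree R2 \<Longrightarrow> eigv N f q w B1 n \<le> eigv N f q w B2 n"
    "n + 1 < degree R1 \<Longrightarrow> eigv N f q w B2 n \<le> eigv N f q w B1 (n + 1)"
proof -
  have a: "\<forall>t. size (filter_mset (\<lambda>x. x \<le> t) (mset (eig_list N f q w B2)))
     \<le> size (filter_mset (\<lambda>x. x \<le> t) (mset (eig_list N f q w B1))) + 0"
  proof
    fix t show "size (filter_mset (\<lambda>x. x \<le> t) (mset (eig_list N f q w B2)))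
     \<le> size (filter_mset (\<lambda>x. x \<le> t) (mset (eig_list N f q w B1))) + 0"
      using c[rule_format, of t] h1(1) h2(1) by auto
  qed
  have b: "\<forall>t. size (filter_mset (\<lambda>x. x \<le> t) (mset (eig_list N f q w B1)))
     \<le> size (filter_mset (\<lambda>x. x \<le> t) (mset (eig_list N f q w B2))) + 1"
  proof
    fix t show "size (filter_mset (\<lambda>x. x \<le> t) (mset (eig_list N f q w B1)))
     \<le> size (filter_mset (\<lambda>x. x \<le> t) (mset (eig_list N f q w B2))) + 1"
      using c[rule_format, of t] h1(1) h2(1) by auto
  qed
  show "n < degree R2 \<Longrightarrow> eigv N f q w B1 n \<le> eigv N f q w B2 n"
    using interl[OF a, of n] h2(2) by (simp only: sl_eig eigv_def add_0_right)
  show "n + 1 < degree R1 \<Longrightarrow> eigv N f q w B2 n \<le> eigv N f q w B1 (n + 1)"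
    using interl[OF b, of n] h1(2) by (simp only: sl_eig eigv_def)
qed

end

context slpK
begin

interpretation RT: rotm pT qT rT sT c0
  using rotT[OF SL c0_le] by (simp add: pT_def qT_def rT_def sT_def)

interpretation RU: rotm pU qU rU sU c0
  using rotU[OF SL c0_le] by (simp add: pU_def qU_def rU_def sU_def)

interpretation RT2: rotm2 pT qT rT sT c0
  by unfold_locales (use DD_nz rT_nz DD_real rT_real in \<open>auto simp: DD_def[symmetric] ev_def\<close>)

interpretation RU2: rotm2 pU qU rU sU c0
  by unfold_locales (use DD_nz rU_nz DD_real rU_real in \<open>auto simp: DU ev_def\<close>)

lemma AT: "\<exists>F. F \<in> {0::int, 1} \<and> F = int (degree rT) - int (degree DD) + (if sgn (lead_coeff DD) = sgn (lead_coeff rT) then 1 else 0)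
   \<and> (\<forall>t. int (cntp rT t) - int (cntp DD t) \<in> {F - 1, F})"
  using RT2.ABS by (simp add: RT.D_def DD_def)

lemma AU: "\<exists>F. F \<in> {0::int, 1} \<and> F = int (degree rU) - int (degree DD) + (if sgn (lead_coeff DD) = sgn (lead_coeff rU) then 1 else 0)
   \<and> (\<forall>t. int (cntp rU t) - int (cntp DD t) \<in> {F - 1, F})"
  using RU2.ABS by (simp add: RU.D_def DU)

lemma GE: "\<forall>t. size (filter_mset (\<lambda>x. x \<le> t) (mset (eig_list N f q w (BC_K \<gamma> k11 k12 k21 k22)))) = cntp DD t"
  "size (mset (eig_list N f q w (BC_K \<gamma> k11 k12 k21 k22))) = degree DD"
  "num_eigs_eq N f q w (BC_K \<gamma> k11 k12 k21 k22) (degree DD)"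
  using gen_cnt[OF DD_nz _ E_mult_real DD_real[unfolded ev_def]] gen_count(1)[OF DD_nz _ E_mult_real DD_real[unfolded ev_def]]
    E_eig by (simp_all add: ev_def)

lemma GT: "\<forall>t. size (filter_mset (\<lambda>x. x \<le> t) (mset (eig_list N f q w (BC_T k11 k12 k21 k22)))) = cntp rT t"
  "size (mset (eig_list N f q w (BC_T k11 k12 k21 k22))) = degree rT"
  "num_eigs_eq N f q w (BC_T k11 k12 k21 k22) (degree rT)"
  using gen_cnt[OF rT_nz _ T_mult_real rT_real[unfolded ev_def]] gen_count(1)[OF rT_nz _ T_mult_real rT_real[unfolded ev_def]]
    T_eig by (simp_all add: ev_def)

lemma GU: "\<forall>t. size (filter_mset (\<lambda>x. x \<le> t) (mset (eig_list N f q w (BC_U k11 k12 k21 k22)))) = cntp rU t"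
  "size (mset (eig_list N f q w (BC_U k11 k12 k21 k22))) = degree rU"
  "num_eigs_eq N f q w (BC_U k11 k12 k21 k22) (degree rU)"
  using gen_cnt[OF rU_nz _ U_mult_real rU_real[unfolded ev_def]] gen_count(1)[OF rU_nz _ U_mult_real rU_real[unfolded ev_def]]
    U_eig by (simp_all add: ev_def)

end

theorem theorem3p6:
  fixes N :: nat and f q w :: "nat \<Rightarrow> real"
    and k11 k12 k21 k22 \<gamma> :: real
  assumes N2: "N \<ge> 2"
    and fnz: "\<forall>n\<le>N. f n \<noteq> 0"
    and wpos: "\<forall>n\<in>{1..N}. w n > 0"
    and SL: "k11 * k22 - k12 * k21 = 1"
    and gam: "-pi < \<gamma>" "\<gamma> \<le> pi"
  defines "E \<equiv> BC_K \<gamma> k11 k12 k21 k22"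
    and "T \<equiv> BC_T k11 k12 k21 k22"
    and "U \<equiv> BC_U k11 k12 k21 k22"
    and "c \<equiv> k11 - f 0 * k12"
  shows
    "(c \<noteq> 0 \<longrightarrow> num_eigs_eq N f q w E N)
   \<and> (c = 0 \<longrightarrow> num_eigs_eq N f q w E (N - 1))
   \<and> (k11 \<noteq> 0 \<longrightarrow> num_eigs_eq N f q w T N)
   \<and> (k11 = 0 \<longrightarrow> num_eigs_eq N f q w T (N - 1))
   \<and> (c \<noteq> 0 \<longrightarrow> num_eigs_eq N f q w U (N - 1))
   \<and> (c = 0 \<longrightarrow> num_eigs_eq N f q w U (N - 2))
   \<and> (c * k11 * f 0 > 0 \<longrightarrow>
        (\<forall>n\<le>N-1. eigv N f q w T n \<le> eigv N f q w E n)
      \<and> (\<forall>n\<le>N-2. eigv N f q w E n \<le> eigv N f q w T (n+1)))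
   \<and> (c * k11 * f 0 < 0 \<longrightarrow>
        (\<forall>n\<le>N-1. eigv N f q w E n \<le> eigv N f q w T n)
      \<and> (\<forall>n\<le>N-2. eigv N f q w T n \<le> eigv N f q w E (n+1)))
   \<and> (c = 0 \<longrightarrow>
        (\<forall>n\<le>N-2. eigv N f q w T n \<le> eigv N f q w E n
                  \<and> eigv N f q w E n \<le> eigv N f q w T (n+1)))
   \<and> (k11 = 0 \<longrightarrow>
        (\<forall>n\<le>N-2. eigv N f q w E n \<le> eigv N f q w T n
                  \<and> eigv N f q w T n \<le> eigv N f q w E (n+1)))
   \<and> (c \<noteq> 0 \<longrightarrow>
        (\<forall>n\<le>N-2. eigv N f q w E n \<le> eigv N f q w U n
                  \<and> eigv N f q w U n \<le> eigv N f q w E (n+1)))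
   \<and> (c = 0 \<longrightarrow>
        (\<forall>n. n + 3 \<le> N \<longrightarrow> eigv N f q w E n \<le> eigv N f q w U n
                  \<and> eigv N f q w U n \<le> eigv N f q w E (n+1)))"
proof -
  interpret K: slpK N f q w k11 k12 k21 k22 \<gamma>
    by unfold_locales (use N2 fnz wpos SL gam in auto)
  have cc: "c = K.cc" by (simp add: c_def K.cc_def)
  have E: "E = BC_K \<gamma> k11 k12 k21 k22" and T: "T = BC_T k11 k12 k21 k22" and U: "U = BC_U k11 k12 k21 k22"
    by (simp_all add: E_def T_def U_def)
  have N1: "N - 1 \<ge> 1" using N2 by simp
  note GE = K.GE[folded E] and GT = K.GT[folded T] and GU = K.GU[folded U]
  obtain FT where FT: "FT \<in> {0, 1}" "FT = int (degree K.rT) - int (degree K.DD) + (if sgn (lead_coeff K.DD) = sgn (lead_coeff K.rT) then 1 else 0)"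
     "\<forall>t. int (cntp K.rT t) - int (cntp K.DD t) \<in> {FT - 1, FT}" using K.AT by blast
  obtain FU where FU: "FU \<in> {0, 1}" "FU = int (degree K.rU) - int (degree K.DD) + (if sgn (lead_coeff K.DD) = sgn (lead_coeff K.rU) then 1 else 0)"
     "\<forall>t. int (cntp K.rU t) - int (cntp K.DD t) \<in> {FU - 1, FU}" using K.AU by blast
  have swap: "\<forall>t. int (cntp B t) - int (cntp A t) \<in> {0, 1}" if "\<forall>t. int (cntp A t) - int (cntp B t) \<in> {0 - 1, 0}" for A B
  proof
    fix t
    from that have "int (cntp A t) - int (cntp B t) \<in> {0 - 1, 0}" by blast
    then show "int (cntp B t) - int (cntp A t) \<in> {0, 1}" by auto
  qed
  have keep: "\<forall>t. int (cntp A t) - int (cntp B t) \<in> {0, 1}" if "\<forall>t. int (cntp A t) - int (cntp B t) \<in> {1 - 1, 1}" for A B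
    using that by auto
  note IT = K.interlace01[OF _ GT(1,2) GE(1,2)]
  note IE = K.interlace01[OF _ GE(1,2) GT(1,2)]
  note IEU = K.interlace01[OF _ GE(1,2) GU(1,2)]
  have p1: "c \<noteq> 0 \<longrightarrow> num_eigs_eq N f q w E N" using GE(3) K.d3 cc by auto
  have p2: "c = 0 \<longrightarrow> num_eigs_eq N f q w E (N - 1)" using GE(3) K.d4 cc by auto
  have p3: "k11 \<noteq> 0 \<longrightarrow> num_eigs_eq N f q w T N" using GT(3) K.d1 by auto
  have p4: "k11 = 0 \<longrightarrow> num_eigs_eq N f q w T (N - 1)" using GT(3) K.d2 by auto
  have p5: "c \<noteq> 0 \<longrightarrow> num_eigs_eq N f q w U (N - 1)" using GU(3) K.d5 cc by auto
  have p6: "c = 0 \<longrightarrow> num_eigs_eq N f q w U (N - 2)" using GU(3) K.d6 cc by auto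
  have sgnlc: "sgn (lead_coeff K.DD) = sgn (lead_coeff K.rT) \<longleftrightarrow> c * k11 * f 0 > 0"
    if c0: "c \<noteq> 0" and k0: "k11 \<noteq> 0"
  proof -
    define XX where "XX = - K.Pi1 * w N"
    have X: "XX \<noteq> 0" using K.Pi1_nz K.wN by (simp add: XX_def)
    have e1: "lead_coeff K.DD = (c / f 0) * XX" using K.d3(2) c0 cc by (simp add: XX_def)
    have e2: "lead_coeff K.rT = k11 * XX" using K.d1(2) k0 by (simp add: XX_def)
    have gen: "sgn (a * XX) = sgn (b * XX) \<longleftrightarrow> sgn a = sgn b" for a b :: real
    proof -
      have sX: "sgn XX \<noteq> 0" using X by (simp add: sgn_eq_0_iff)
      show ?thesis unfolding sgn_mult[of a] sgn_mult[of b] using sX by simp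
    qed
    have "sgn (lead_coeff K.DD) = sgn (lead_coeff K.rT) \<longleftrightarrow> sgn (c / f 0) = sgn k11"
      by (simp only: e1 e2 gen)
    also have "\<dots> \<longleftrightarrow> (c / f 0) * k11 > 0"
      by (rule sgn_eq_iff_mult_pos) (use c0 k0 K.f0 in auto)
    also have "\<dots> \<longleftrightarrow> c * k11 * f 0 > 0"
    proof -
      have "(c / f 0) * k11 = (c * k11) / f 0" by simp
      moreover have "(c * k11) / f 0 > 0 \<longleftrightarrow> (c * k11) * f 0 > 0"
        by (simp only: zero_less_divide_iff zero_less_mult_iff[of "c * k11" "f 0"])
      ultimately show ?thesis by simp
    qed
    finally show ?thesis .
  qed
  have p7: "c * k11 * f 0 > 0 \<longrightarrow>
        (\<forall>n\<le>N-1. eigv N f q w T n \<le> eigv N f q w E n)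
      \<and> (\<forall>n\<le>N-2. eigv N f q w E n \<le> eigv N f q w T (n+1))"
  proof
    assume h: "c * k11 * f 0 > 0"
    then have c0: "c \<noteq> 0" and k0: "k11 \<noteq> 0" by auto
    have "FT = 1" using FT(2) sgnlc[OF c0 k0] h K.d1(1)[OF k0] K.d3(1) c0 cc by simp
    then have r: "\<forall>t. int (cntp K.rT t) - int (cntp K.DD t) \<in> {0, 1}" using FT(3) keep by simp
    show "(\<forall>n\<le>N-1. eigv N f q w T n \<le> eigv N f q w E n) \<and> (\<forall>n\<le>N-2. eigv N f q w E n \<le> eigv N f q w T (n+1))"
      using IT(1)[OF r] IT(2)[OF r] K.d1(1)[OF k0] K.d3(1) c0 cc N2 by auto
  qed
  have p8: "c * k11 * f 0 < 0 \<longrightarrow>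
        (\<forall>n\<le>N-1. eigv N f q w E n \<le> eigv N f q w T n)
      \<and> (\<forall>n\<le>N-2. eigv N f q w T n \<le> eigv N f q w E (n+1))"
  proof
    assume h: "c * k11 * f 0 < 0"
    then have c0: "c \<noteq> 0" and k0: "k11 \<noteq> 0" by auto
    have "FT = 0" using FT(2) sgnlc[OF c0 k0] h K.d1(1)[OF k0] K.d3(1) c0 cc by simp
    then have r: "\<forall>t. int (cntp K.DD t) - int (cntp K.rT t) \<in> {0, 1}" using FT(3) swap by simp
    show "(\<forall>n\<le>N-1. eigv N f q w E n \<le> eigv N f q w T n) \<and> (\<forall>n\<le>N-2. eigv N f q w T n \<le> eigv N f q w E (n+1))"
      using IE(1)[OF r] IE(2)[OF r] K.d1(1)[OF k0] K.d3(1) c0 cc N2 by auto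
  qed
  have p9: "c = 0 \<longrightarrow>
        (\<forall>n\<le>N-2. eigv N f q w T n \<le> eigv N f q w E n
                  \<and> eigv N f q w E n \<le> eigv N f q w T (n+1))"
  proof
    assume c0: "c = 0"
    then have k0: "k11 \<noteq> 0" using K.k11_nz_if cc by simp
    have "FT \<ge> 1" using FT(2) K.d1(1)[OF k0] K.d4 c0 cc N2 by auto
    then have "FT = 1" using FT(1) by auto
    then have r: "\<forall>t. int (cntp K.rT t) - int (cntp K.DD t) \<in> {0, 1}" using FT(3) keep by simp
    show "\<forall>n\<le>N-2. eigv N f q w T n \<le> eigv N f q w E n \<and> eigv N f q w E n \<le> eigv N f q w T (n+1)"
      using IT(1)[OF r] IT(2)[OF r] K.d1(1)[OF k0] K.d4 c0 cc N2 by auto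
  qed
  have p10: "k11 = 0 \<longrightarrow>
        (\<forall>n\<le>N-2. eigv N f q w E n \<le> eigv N f q w T n
                  \<and> eigv N f q w T n \<le> eigv N f q w E (n+1))"
  proof
    assume k0: "k11 = 0"
    then have c0: "c \<noteq> 0" using K.k11_nz_if cc by auto
    have "FT \<le> 0" using FT(2) K.d2[OF k0] K.d3(1) c0 cc N2 by auto
    then have "FT = 0" using FT(1) by auto
    then have r: "\<forall>t. int (cntp K.DD t) - int (cntp K.rT t) \<in> {0, 1}" using FT(3) swap by simp
    show "\<forall>n\<le>N-2. eigv N f q w E n \<le> eigv N f q w T n \<and> eigv N f q w T n \<le> eigv N f q w E (n+1)"
      using IE(1)[OF r] IE(2)[OF r] K.d2[OF k0] K.d3(1) c0 cc N2 by auto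
  qed
  have p11: "c \<noteq> 0 \<longrightarrow>
        (\<forall>n\<le>N-2. eigv N f q w E n \<le> eigv N f q w U n
                  \<and> eigv N f q w U n \<le> eigv N f q w E (n+1))"
  proof
    assume c0: "c \<noteq> 0"
    have "FU \<le> 0" using FU(2) K.d5 K.d3(1) c0 cc N2 by auto
    then have "FU = 0" using FU(1) by auto
    then have r: "\<forall>t. int (cntp K.DD t) - int (cntp K.rU t) \<in> {0, 1}" using FU(3) swap by simp
    show "\<forall>n\<le>N-2. eigv N f q w E n \<le> eigv N f q w U n \<and> eigv N f q w U n \<le> eigv N f q w E (n+1)"
      using IEU(1)[OF r] IEU(2)[OF r] K.d5 K.d3(1) c0 cc N2 by auto
  qed
  have p12: "c = 0 \<longrightarrow>
        (\<forall>n. n + 3 \<le> N \<longrightarrow> eigv N f q w E n \<le> eigv N f q w U n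
                  \<and> eigv N f q w U n \<le> eigv N f q w E (n+1))"
  proof
    assume c0: "c = 0"
    have "FU \<le> 0" using FU(2) K.d6 K.d4 c0 cc N2 by auto
    then have "FU = 0" using FU(1) by auto
    then have r: "\<forall>t. int (cntp K.DD t) - int (cntp K.rU t) \<in> {0, 1}" using FU(3) swap by simp
    show "\<forall>n. n + 3 \<le> N \<longrightarrow> eigv N f q w E n \<le> eigv N f q w U n \<and> eigv N f q w U n \<le> eigv N f q w E (n+1)"
      using IEU(1)[OF r] IEU(2)[OF r] K.d6 K.d4 c0 cc N2 by auto
  qed
  show ?thesis using p1 p2 p3 p4 p5 p6 p7 p8 p9 p10 p11 p12 by blast
qed


end
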